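(* Let $D=(V,E)$ be a finite connected graph with weights $\mathbf c_e\ge1$, let $\Delta\subset V$ be nonempty, and let $\xi,\xi'$ be two absolute-value boundary conditions on $\Delta$ with $\xi\preceq_{abs}\xi'$. Let $F,G$ be increasing real functions of functions $V\to\mathbb Z$. Then $$\mathbb E^\xi_D[F(|h|)G(|h|)]\ge\mathbb E^\xi_D[F(|h|)]\,\mathbb E^\xi_D[G(|h|)]\qquad\text{and}\qquad \mathbb E^{\xi'}_D[F(|h|)]\ge\mathbb E^{\xi}_D[F(|h|)].$$
   Context: $\mathbb Z_{\rm odd}=2\mathbb Z+1$. A height function on $D$ is $h:V\to\mathbb Z_{\rm odd}$ with $|h(v)-h(w)|\le 2$ for all edges; weight $W(h)=\prod_{e=\langle v,w\rangle}\mathbf c_e^{\mathbb 1\{h(v)=h(w)\}}$. A (set-valued) boundary condition on $\Delta$ assigns to each $x\in\Delta$ a finite nonempty $\xi(x)\subset\mathbb Z_{\rm odd}$ such that some height function $h$ satisfies $h(x)\in\xi(x)$ for all $x\in\Delta$; $\mathbb P^\xi_D[\{h\}]\propto\mathbb 1\{h(x)\in\xi(x)\,\forall x\in\Delta\}W(h)$. For integers $a\le b$, $[a,b]$ denotes the set of odd integers in $[a,b]$ and $\pm[a,b]=[a,b]\cup[-b,-a]$. An absolute-value boundary condition is a boundary condition $\xi$ for which there is $S\subset\Delta$ (possibly empty) with $\xi(x)=[a(x),b(x)]$ for $x\in S$, where $-1\le a(x)\le b(x)$ and $a(x)+b(x)\ge2$, and $\xi(x)=\pm[a(x),b(x)]$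 for $x\in\Delta\setminus S$, where $1\le a(x)\le b(x)$. For two such conditions $\xi$ (with $S,a,b$) and $\xi'$ (with $S',a',b'$) write $\xi\preceq_{abs}\xi'$ if $S\subset S'$, $a\le a'$ and $b\le b'$ on $S\cup(\Delta\setminus S')$, and $b(x)\le|a'(x)|$ for all $x\in S'\setminus S$. A function $F$ is increasing if $f\le g$ pointwise implies $F(f)\le F(g)$. *)

theory Defs
  imports Complex_Main
begin

text \<open>Graph D = (V,E): V is the (finite) vertex type 'v (V = UNIV), E a set of
  unordered edges, each a two-element set of vertices.\<close>

definition simple_graph :: "'v set set \<Rightarrow> bool" where
  "simple_graph E \<longleftrightarrow> (\<forall>e\<in>E. card e = 2)"

definition graph_connected :: "'v set set \<Rightarrow> bool" where
  "graph_connected E \<longleftrightarrow> (\<forall>u v. (\<lambda>x y. {x, y} \<in> E)\<^sup>*\<^sup>* u v)"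

definition height_fun :: "'v set set \<Rightarrow> ('v \<Rightarrow> int) \<Rightarrow> bool" where
  "height_fun E h \<longleftrightarrow> (\<forall>v. odd (h v)) \<and>
     (\<forall>e\<in>E. \<forall>v w. e = {v, w} \<longrightarrow> \<bar>h v - h w\<bar> \<le> 2)"

definition weight :: "'v set set \<Rightarrow> ('v set \<Rightarrow> real) \<Rightarrow> ('v \<Rightarrow> int) \<Rightarrow> real" where
  "weight E c h = (\<Prod>e\<in>E. if (\<exists>v w. e = {v, w} \<and> h v = h w) then c e else 1)"

definition boundary_cond :: "'v set set \<Rightarrow> 'v set \<Rightarrow> ('v \<Rightarrow> int set) \<Rightarrow> bool" where
  "boundary_cond E \<Delta> \<xi> \<longleftrightarrow>
     (\<forall>x\<in>\<Delta>. finite (\<xi> x) \<and> \<xi> x \<noteq> {} \<and> (\<forall>k\<in>\<xi> x. odd k)) \<and>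
     (\<exists>h. height_fun E h \<and> (\<forall>x\<in>\<Delta>. h x \<in> \<xi> x))"

definition admissible :: "'v set set \<Rightarrow> 'v set \<Rightarrow> ('v \<Rightarrow> int set) \<Rightarrow> ('v \<Rightarrow> int) set" where
  "admissible E \<Delta> \<xi> = {h. height_fun E h \<and> (\<forall>x\<in>\<Delta>. h x \<in> \<xi> x)}"

definition expect :: "'v set set \<Rightarrow> ('v set \<Rightarrow> real) \<Rightarrow> 'v set \<Rightarrow> ('v \<Rightarrow> int set)
     \<Rightarrow> (('v \<Rightarrow> int) \<Rightarrow> real) \<Rightarrow> real" where
  "expect E c \<Delta> \<xi> f =
     (\<Sum>h\<in>admissible E \<Delta> \<xi>. weight E c h * f h) / (\<Sum>h\<in>admissible E \<Delta> \<xi>. weight E c h)"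

definition odd_interval :: "int \<Rightarrow> int \<Rightarrow> int set" where
  "odd_interval a b = {k. odd k \<and> a \<le> k \<and> k \<le> b}"

definition pm_interval :: "int \<Rightarrow> int \<Rightarrow> int set" where
  "pm_interval a b = odd_interval a b \<union> odd_interval (- b) (- a)"

definition abs_bc :: "'v set set \<Rightarrow> 'v set \<Rightarrow> ('v \<Rightarrow> int set) \<Rightarrow> 'v set
     \<Rightarrow> ('v \<Rightarrow> int) \<Rightarrow> ('v \<Rightarrow> int) \<Rightarrow> bool" where
  "abs_bc E \<Delta> \<xi> S a b \<longleftrightarrow> boundary_cond E \<Delta> \<xi> \<and> S \<subseteq> \<Delta> \<and>
     (\<forall>x\<in>S. \<xi> x = odd_interval (a x) (b x) \<and> -1 \<le> a x \<and> a x \<le> b x \<and> a x + b x \<ge> 2) \<and>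
     (\<forall>x\<in>\<Delta> - S. \<xi> x = pm_interval (a x) (b x) \<and> 1 \<le> a x \<and> a x \<le> b x)"

definition abs_le :: "'v set \<Rightarrow> 'v set \<Rightarrow> ('v \<Rightarrow> int) \<Rightarrow> ('v \<Rightarrow> int)
     \<Rightarrow> 'v set \<Rightarrow> ('v \<Rightarrow> int) \<Rightarrow> ('v \<Rightarrow> int) \<Rightarrow> bool" where
  "abs_le \<Delta> S a b S' a' b' \<longleftrightarrow> S \<subseteq> S' \<and>
     (\<forall>x\<in>S \<union> (\<Delta> - S'). a x \<le> a' x \<and> b x \<le> b' x) \<and>
     (\<forall>x\<in>S' - S. b x \<le> \<bar>a' x\<bar>)"

definition increasing_fn :: "(('v \<Rightarrow> int) \<Rightarrow> real) \<Rightarrow> bool" where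
  "increasing_fn F \<longleftrightarrow> (\<forall>f g. (\<forall>v. f v \<le> g v) \<longrightarrow> F f \<le> F g)"

end

theory Submission
  imports Defs
begin


lemma two_point:
  fixes a0 a1 b0 b1 c0 c1 d0 d1 :: real
  assumes nn: "a0 \<ge> 0" "a1 \<ge> 0" "b0 \<ge> 0" "b1 \<ge> 0" "c0 \<ge> 0" "c1 \<ge> 0" "d0 \<ge> 0" "d1 \<ge> 0"
    and h00: "a0*b0 \<le> c0*d0" and h01: "a0*b1 \<le> c1*d0" and h10: "a1*b0 \<le> c1*d0" and h11: "a1*b1 \<le> c1*d1"
  shows "(a0+a1)*(b0+b1) \<le> (c0+c1)*(d0+d1)"
proof (cases "c1*d0 = 0")
  case True
  have "a0*b1 \<ge> 0" "a1*b0 \<ge> 0" using nn by auto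
  then have "a0*b1 = 0" "a1*b0 = 0" using h01 h10 True by linarith+
  moreover have "c0*d1 \<ge> 0" "c1*d0 \<ge> 0" using nn by auto
  moreover have "(a0+a1)*(b0+b1) = a0*b0 + a1*b1 + a0*b1 + a1*b0"
    "(c0+c1)*(d0+d1) = c0*d0 + c1*d1 + c0*d1 + c1*d0" by (simp_all add: algebra_simps)
  ultimately show ?thesis using h00 h11 by linarith
next
  case False
  then have c1: "c1 > 0" and d0: "d0 > 0" using nn by (auto simp: less_le)
  define t where "t = c1*d0"
  have t: "t > 0" using c1 d0 by (simp add: t_def)
  have key: "t*t + (a0*b1)*(a1*b0) \<ge> t*(a0*b1 + a1*b0)"
  proof -
    have "(t - a0*b1)*(t - a1*b0) \<ge> 0" using h01 h10 by (simp add: t_def)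
    thus ?thesis by (simp add: algebra_simps)
  qed
  have e1: "(c0+c1)*(d0+d1) * t = c0*d0*t + (c0*d0)*(c1*d1) + t*t + c1*d1*t" by (simp add: t_def algebra_simps)
  have e2: "(c0*d0)*(c1*d1) \<ge> (a0*b0)*(a1*b1)"
    by (rule mult_mono[OF h00 h11]) (use nn in auto)
  have A: "(c0+c1)*(d0+d1) * t \<ge> c0*d0*t + (a0*b0)*(a1*b1) + t*t + c1*d1*t" using e1 e2 by linarith
  have B: "c0*d0*t \<ge> a0*b0*t" "c1*d1*t \<ge> a1*b1*t" using h00 h11 t by auto
  have "(a0+a1)*(b0+b1)*t = a0*b0*t + a1*b1*t + t*(a0*b1 + a1*b0)" by (simp add: algebra_simps)
  also have "\<dots> \<le> a0*b0*t + a1*b1*t + t*t + (a0*b1)*(a1*b0)" using key by linarith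
  also have "(a0*b1)*(a1*b0) = (a0*b0)*(a1*b1)" by (simp add: algebra_simps)
  finally have "(a0+a1)*(b0+b1)*t \<le> (c0+c1)*(d0+d1) * t" using A B by linarith
  thus ?thesis using t by simp
qed

lemma sum_Pow_insert:
  fixes f :: "'a set \<Rightarrow> real"
  assumes "finite U" "z \<notin> U"
  shows "(\<Sum>X\<in>Pow (insert z U). f X) = (\<Sum>X\<in>Pow U. f X + f (insert z X))"
proof -
  have "(\<Sum>X\<in>Pow (insert z U). f X) = (\<Sum>X\<in>Pow U. f X) + (\<Sum>X\<in>insert z ` Pow U. f X)"
    unfolding Pow_insert by (rule sum.union_disjoint) (use assms in auto)
  also have "(\<Sum>X\<in>insert z ` Pow U. f X) = (\<Sum>X\<in>Pow U. f (insert z X))"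
    by (subst sum.reindex) (use assms in \<open>auto intro!: inj_onI simp: o_def\<close>)
  finally show ?thesis by (simp add: sum.distrib)
qed

lemma four_functions:
  fixes f1 f2 f3 f4 :: "'a set \<Rightarrow> real"
  assumes "finite U"
    and "\<And>X. X \<subseteq> U \<Longrightarrow> f1 X \<ge> 0" "\<And>X. X \<subseteq> U \<Longrightarrow> f2 X \<ge> 0"
    and "\<And>X. X \<subseteq> U \<Longrightarrow> f3 X \<ge> 0" "\<And>X. X \<subseteq> U \<Longrightarrow> f4 X \<ge> 0"
    and "\<And>X Y. X \<subseteq> U \<Longrightarrow> Y \<subseteq> U \<Longrightarrow> f1 X * f2 Y \<le> f3 (X \<union> Y) * f4 (X \<inter> Y)"
  shows "(\<Sum>X\<in>Pow U. f1 X) * (\<Sum>X\<in>Pow U. f2 X) \<le> (\<Sum>X\<in>Pow U. f3 X) * (\<Sum>X\<in>Pow U. f4 X)"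
  using assms
proof (induction U arbitrary: f1 f2 f3 f4 rule: finite_induct)
  case empty
  then show ?case by simp
next
  case (insert z U)
  let ?g = "\<lambda>f X. f X + f (insert z X)"
  have "(\<Sum>X\<in>Pow U. ?g f1 X) * (\<Sum>X\<in>Pow U. ?g f2 X) \<le> (\<Sum>X\<in>Pow U. ?g f3 X) * (\<Sum>X\<in>Pow U. ?g f4 X)"
  proof (rule insert.IH)
    fix X assume X: "X \<subseteq> U"
    have s: "X \<subseteq> insert z U" "insert z X \<subseteq> insert z U" using X by auto
    show "?g f1 X \<ge> 0" "?g f2 X \<ge> 0" "?g f3 X \<ge> 0" "?g f4 X \<ge> 0"
      using insert.prems(1-4)[OF s(1)] insert.prems(1-4)[OF s(2)] by auto
  next
    fix X Y assume X: "X \<subseteq> U" and Y: "Y \<subseteq> U"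
    have zX: "z \<notin> X" and zY: "z \<notin> Y" using X Y insert.hyps by auto
    have s: "X \<subseteq> insert z U" "Y \<subseteq> insert z U" "insert z X \<subseteq> insert z U" "insert z Y \<subseteq> insert z U"
      using X Y by auto
    show "?g f1 X * ?g f2 Y \<le> ?g f3 (X \<union> Y) * ?g f4 (X \<inter> Y)"
    proof (rule two_point)
      show "f1 X * f2 Y \<le> f3 (X \<union> Y) * f4 (X \<inter> Y)" using insert.prems(5)[OF s(1,2)] .
      show "f1 X * f2 (insert z Y) \<le> f3 (insert z (X \<union> Y)) * f4 (X \<inter> Y)"
        using insert.prems(5)[OF s(1,4)] zX by (simp add: Int_insert_right)
      show "f1 (insert z X) * f2 Y \<le> f3 (insert z (X \<union> Y)) * f4 (X \<inter> Y)"
        using insert.prems(5)[OF s(3,2)] zY by (simp add: Int_insert_left)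
      show "f1 (insert z X) * f2 (insert z Y) \<le> f3 (insert z (X \<union> Y)) * f4 (insert z (X \<inter> Y))"
        using insert.prems(5)[OF s(3,4)] by simp
    qed (use s X Y in \<open>auto intro!: insert.prems(1-4)\<close>)
  qed
  thus ?case using insert.hyps by (simp add: sum_Pow_insert)
qed


definition sat :: "('a \<Rightarrow> 'w) \<Rightarrow> ('a \<Rightarrow> 'w) \<Rightarrow> 'a set \<Rightarrow> ('w \<Rightarrow> bool) \<Rightarrow> bool" where
  "sat p q W \<sigma> \<longleftrightarrow> (\<forall>e\<in>W. \<sigma> (p e) = \<sigma> (q e))"

definition Ncnt :: "('a \<Rightarrow> 'w::finite) \<Rightarrow> ('a \<Rightarrow> 'w) \<Rightarrow> 'a set \<Rightarrow> real" where
  "Ncnt p q W = real (card {\<sigma>. sat p q W \<sigma>})"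

definition conn :: "('a \<Rightarrow> 'w) \<Rightarrow> ('a \<Rightarrow> 'w) \<Rightarrow> 'a set \<Rightarrow> 'w \<Rightarrow> 'w \<Rightarrow> bool" where
  "conn p q W = (\<lambda>x y. \<exists>e\<in>W. (p e = x \<and> q e = y) \<or> (q e = x \<and> p e = y))\<^sup>*\<^sup>*"

lemma sat_conn_const:
  assumes "sat p q W \<sigma>" "conn p q W x y"
  shows "\<sigma> y = \<sigma> x"
  using assms(2) unfolding conn_def
proof (induction rule: rtranclp_induct)
  case base then show ?case by simp
next
  case (step y z)
  then show ?case using assms(1) unfolding sat_def by metis
qed

lemma conn_closed:
  assumes "e \<in> W"
  shows "conn p q W x (p e) \<longleftrightarrow> conn p q W x (q e)"
proof
  assume "conn p q W x (p e)"
  then show "conn p q W x (q e)" unfolding conn_def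
    by (rule rtranclp.rtrancl_into_rtrancl) (use assms in blast)
next
  assume "conn p q W x (q e)"
  then show "conn p q W x (p e)" unfolding conn_def
    by (rule rtranclp.rtrancl_into_rtrancl) (use assms in blast)
qed

lemma flip_half:
  fixes p q :: "'a \<Rightarrow> 'w::finite"
  assumes "\<exists>\<sigma>0. sat p q W \<sigma>0 \<and> \<sigma>0 (p e) \<noteq> \<sigma>0 (q e)"
  shows "card {\<sigma>. sat p q W \<sigma> \<and> \<sigma> (p e) = \<sigma> (q e)} = card {\<sigma>. sat p q W \<sigma> \<and> \<sigma> (p e) \<noteq> \<sigma> (q e)}"
proof -
  obtain \<sigma>0 where s0: "sat p q W \<sigma>0" and d0: "\<sigma>0 (p e) \<noteq> \<sigma>0 (q e)" using assms by blast
  define R where "R = {w. conn p q W (p e) w}"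
  have pR: "p e \<in> R" by (simp add: R_def conn_def)
  have qR: "q e \<notin> R"
  proof
    assume "q e \<in> R"
    then have "\<sigma>0 (q e) = \<sigma>0 (p e)" using sat_conn_const[OF s0] by (simp add: R_def)
    with d0 show False by simp
  qed
  define \<phi> where "\<phi> = (\<lambda>\<sigma> w. if w \<in> R then \<not> \<sigma> w else (\<sigma> w :: bool))"
  have inv: "\<phi> (\<phi> \<sigma>) = \<sigma>" for \<sigma> by (auto simp: \<phi>_def)
  have satp: "sat p q W (\<phi> \<sigma>) \<longleftrightarrow> sat p q W \<sigma>" for \<sigma>
  proof -
    have "\<forall>e'\<in>W. (p e' \<in> R \<longleftrightarrow> q e' \<in> R)"
    proof
      fix e' assume "e' \<in> W"
      show "(p e' \<in> R \<longleftrightarrow> q e' \<in> R)" unfolding R_def mem_Collect_eq by (rule conn_closed[OF \<open>e' \<in> W\<close>])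
    qed
    then show ?thesis unfolding sat_def \<phi>_def by auto
  qed
  have eqp: "(\<phi> \<sigma> (p e) = \<phi> \<sigma> (q e)) \<longleftrightarrow> \<sigma> (p e) \<noteq> \<sigma> (q e)" for \<sigma>
    using pR qR by (auto simp: \<phi>_def)
  have eqp2: "\<phi> \<sigma> (p e) = (\<not> \<sigma> (p e))" "\<phi> \<sigma> (q e) = \<sigma> (q e)" for \<sigma>
    using pR qR by (auto simp: \<phi>_def)
  have "bij_betw \<phi> {\<sigma>. sat p q W \<sigma> \<and> \<sigma> (p e) = \<sigma> (q e)} {\<sigma>. sat p q W \<sigma> \<and> \<sigma> (p e) \<noteq> \<sigma> (q e)}"
    by (rule bij_betw_byWitness[where f'=\<phi>]) (simp_all add: inv satp eqp2 image_subset_iff)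
  then show ?thesis by (rule bij_betw_same_card)
qed

lemma Ncnt_pos: "Ncnt p q W > 0"
proof -
  have "(\<lambda>_. True) \<in> {\<sigma>. sat p q W \<sigma>}" by (simp add: sat_def)
  then have "card {\<sigma>. sat p q W \<sigma>} > 0" by (intro card_gt_0_iff[THEN iffD2]) auto
  then show ?thesis by (simp add: Ncnt_def)
qed

lemma Ncnt_split:
  "Ncnt p q W = real (card {\<sigma>. sat p q W \<sigma> \<and> \<sigma> (p e) = \<sigma> (q e)}) + real (card {\<sigma>. sat p q W \<sigma> \<and> \<sigma> (p e) \<noteq> \<sigma> (q e)})"
proof -
  have "{\<sigma>. sat p q W \<sigma>} = {\<sigma>. sat p q W \<sigma> \<and> \<sigma> (p e) = \<sigma> (q e)} \<union> {\<sigma>. sat p q W \<sigma> \<and> \<sigma> (p e) \<noteq> \<sigma> (q e)}" by auto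
  then show ?thesis unfolding Ncnt_def by (simp add: card_Un_disjoint[symmetric] del: Collect_conj_eq) (subst card_Un_disjoint, auto)
qed

lemma Ncnt_insert: "Ncnt p q (insert e W) = real (card {\<sigma>. sat p q W \<sigma> \<and> \<sigma> (p e) = \<sigma> (q e)})"
  unfolding Ncnt_def sat_def by (simp add: conj_commute)

lemma Ncnt_ratio:
  fixes p q :: "'a \<Rightarrow> 'w::finite"
  assumes "H1 \<subseteq> H2"
  shows "Ncnt p q (insert e H2) * Ncnt p q H1 \<ge> Ncnt p q H2 * Ncnt p q (insert e H1)"
proof (cases "\<exists>\<sigma>0. sat p q H1 \<sigma>0 \<and> \<sigma>0 (p e) \<noteq> \<sigma>0 (q e)")
  case False
  then have F2: "\<not> (\<exists>\<sigma>0. sat p q H2 \<sigma>0 \<and> \<sigma>0 (p e) \<noteq> \<sigma>0 (q e))"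
    using assms unfolding sat_def by blast
  have k1: "sat p q H1 \<sigma> \<Longrightarrow> \<sigma> (p e) = \<sigma> (q e)" for \<sigma> using False by blast
  have k2: "sat p q H2 \<sigma> \<Longrightarrow> \<sigma> (p e) = \<sigma> (q e)" for \<sigma> using F2 by blast
  have "sat p q (insert e H1) = sat p q H1"
    by (rule ext) (use k1 in \<open>unfold sat_def, blast\<close>)
  moreover have "sat p q (insert e H2) = sat p q H2"
    by (rule ext) (use k2 in \<open>unfold sat_def, blast\<close>)
  ultimately have "Ncnt p q (insert e H1) = Ncnt p q H1" "Ncnt p q (insert e H2) = Ncnt p q H2"
    unfolding Ncnt_def by simp_all
  then show ?thesis by simp
next
  case True
  have h1: "Ncnt p q H1 = 2 * Ncnt p q (insert e H1)"
    using flip_half[OF True] Ncnt_split[of p q H1 e] Ncnt_insert[of p q e H1] by simp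
  have h2: "Ncnt p q H2 \<le> 2 * Ncnt p q (insert e H2)"
  proof (cases "\<exists>\<sigma>0. sat p q H2 \<sigma>0 \<and> \<sigma>0 (p e) \<noteq> \<sigma>0 (q e)")
    case True
    then show ?thesis using flip_half[OF True] Ncnt_split[of p q H2 e] Ncnt_insert[of p q e H2] by simp
  next
    case False
    then have k2: "sat p q H2 \<sigma> \<Longrightarrow> \<sigma> (p e) = \<sigma> (q e)" for \<sigma> by blast
    have "sat p q (insert e H2) = sat p q H2"
      by (rule ext) (use k2 in \<open>unfold sat_def, blast\<close>)
    then have "Ncnt p q (insert e H2) = Ncnt p q H2"
      unfolding Ncnt_def by simp
    then show ?thesis using Ncnt_pos[of p q H2] by simp
  qed
  have "Ncnt p q H2 * Ncnt p q (insert e H1) \<le> 2 * Ncnt p q (insert e H2) * Ncnt p q (insert e H1)"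
    using h2 Ncnt_pos[of p q "insert e H1"] by (intro mult_right_mono) auto
  also have "\<dots> = Ncnt p q (insert e H2) * Ncnt p q H1" using h1 by simp
  finally show ?thesis .
qed

lemma Ncnt_aux:
  fixes p q :: "'a \<Rightarrow> 'w::finite"
  assumes "finite X" "B \<subseteq> W"
  shows "Ncnt p q (W \<union> X) * Ncnt p q B \<ge> Ncnt p q W * Ncnt p q (B \<union> X)"
  using assms(1)
proof (induction X rule: finite_induct)
  case empty then show ?case by simp
next
  case (insert e X)
  have r: "Ncnt p q (insert e (W \<union> X)) * Ncnt p q (B \<union> X) \<ge> Ncnt p q (W \<union> X) * Ncnt p q (insert e (B \<union> X))"
    by (rule Ncnt_ratio) (use assms(2) in auto)
  define a where "a = Ncnt p q (insert e (W \<union> X))"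
  define b where "b = Ncnt p q (B \<union> X)"
  define c where "c = Ncnt p q (W \<union> X)"
  define d where "d = Ncnt p q (insert e (B \<union> X))"
  define nB where "nB = Ncnt p q B"
  define nW where "nW = Ncnt p q W"
  have pos: "a > 0" "b > 0" "c > 0" "d > 0" "nB > 0" "nW > 0"
    by (simp_all add: a_def b_def c_def d_def nB_def nW_def Ncnt_pos)
  have r': "a * b \<ge> c * d" using r by (simp add: a_def b_def c_def d_def)
  have ih: "c * nB \<ge> nW * b" using insert.IH by (simp add: c_def nB_def nW_def b_def)
  have "nW * d * b \<le> c * nB * d" using ih pos by (simp add: mult.commute mult.left_commute mult_right_mono)
  also have "\<dots> = (c * d) * nB" by (simp add: algebra_simps)
  also have "\<dots> \<le> (a * b) * nB" using r' pos by (intro mult_right_mono) auto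
  finally have "nW * d * b \<le> a * nB * b" by (simp add: algebra_simps)
  then have "nW * d \<le> a * nB" using pos by simp
  then show ?case by (simp add: a_def d_def nB_def nW_def)
qed

lemma Ncnt_supermod:
  fixes p q :: "'a \<Rightarrow> 'w::finite"
  assumes "finite W'"
  shows "Ncnt p q (W \<union> W') * Ncnt p q (W \<inter> W') \<ge> Ncnt p q W * Ncnt p q W'"
proof -
  have "Ncnt p q (W \<union> (W' - W)) * Ncnt p q (W \<inter> W') \<ge> Ncnt p q W * Ncnt p q ((W \<inter> W') \<union> (W' - W))"
    by (rule Ncnt_aux) (use assms in auto)
  moreover have "W \<union> (W' - W) = W \<union> W'" "(W \<inter> W') \<union> (W' - W) = W'" by auto
  ultimately show ?thesis by simp
qed


definition Zf :: "('a \<Rightarrow> 'w::finite) \<Rightarrow> ('a \<Rightarrow> 'w) \<Rightarrow> 'a set \<Rightarrow> ('a \<Rightarrow> real) \<Rightarrow> real" where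
  "Zf p q A \<beta> = (\<Sum>\<sigma>::'w \<Rightarrow> bool\<in>UNIV. \<Prod>e\<in>A. (if \<sigma> (p e) = \<sigma> (q e) then 1 else \<beta> e))"

definition PW :: "'a set \<Rightarrow> ('a \<Rightarrow> real) \<Rightarrow> 'a set \<Rightarrow> real" where
  "PW A \<beta> W = (\<Prod>e\<in>W. 1 - \<beta> e) * (\<Prod>e\<in>A - W. \<beta> e)"

lemma Zf_ES:
  fixes p q :: "'a \<Rightarrow> 'w::finite"
  assumes "finite A"
  shows "Zf p q A \<beta> = (\<Sum>W\<in>Pow A. PW A \<beta> W * Ncnt p q W)"
proof -
  have "Zf p q A \<beta> = (\<Sum>\<sigma>::'w\<Rightarrow>bool\<in>UNIV. \<Prod>e\<in>A. (1 - \<beta> e) * (if \<sigma> (p e) = \<sigma> (q e) then 1 else 0) + \<beta> e)"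
    unfolding Zf_def by (rule sum.cong[OF refl], rule prod.cong[OF refl]) auto
  also have "\<dots> = (\<Sum>\<sigma>::'w\<Rightarrow>bool\<in>UNIV. \<Sum>W\<in>Pow A. (\<Prod>e\<in>W. (1 - \<beta> e) * (if \<sigma> (p e) = \<sigma> (q e) then 1 else 0)) * (\<Prod>e\<in>A-W. \<beta> e))"
    by (intro sum.cong refl prod_add assms)
  also have "\<dots> = (\<Sum>\<sigma>::'w\<Rightarrow>bool\<in>UNIV. \<Sum>W\<in>Pow A. PW A \<beta> W * (if sat p q W \<sigma> then 1 else 0))"
  proof (intro sum.cong refl)
    fix \<sigma> :: "'w \<Rightarrow> bool" and W assume W: "W \<in> Pow A"
    have fW: "finite W" using W assms finite_subset by auto
    have "(\<Prod>e\<in>W. (1 - \<beta> e) * (if \<sigma> (p e) = \<sigma> (q e) then 1 else 0)) = (\<Prod>e\<in>W. 1 - \<beta> e) * (\<Prod>e\<in>W. (if \<sigma> (p e) = \<sigma> (q e) then 1 else (0::real)))"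
      by (simp add: prod.distrib)
    also have "(\<Prod>e\<in>W. (if \<sigma> (p e) = \<sigma> (q e) then 1 else (0::real))) = (if sat p q W \<sigma> then 1 else 0)"
      using fW by (simp add: sat_def prod_zero_iff)
    finally show "(\<Prod>e\<in>W. (1 - \<beta> e) * (if \<sigma> (p e) = \<sigma> (q e) then 1 else 0)) * (\<Prod>e\<in>A-W. \<beta> e) = PW A \<beta> W * (if sat p q W \<sigma> then 1 else 0)"
      by (simp add: PW_def)
  qed
  also have "\<dots> = (\<Sum>W\<in>Pow A. \<Sum>\<sigma>\<in>UNIV. PW A \<beta> W * (if sat p q W \<sigma> then 1 else 0))"
    by (rule sum.swap)
  also have "\<dots> = (\<Sum>W\<in>Pow A. PW A \<beta> W * Ncnt p q W)"
  proof (intro sum.cong refl)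
    fix W
    have "(\<Sum>\<sigma>::'w\<Rightarrow>bool\<in>UNIV. (if sat p q W \<sigma> then 1 else 0::real)) = real (card {\<sigma>. sat p q W \<sigma>})"
      by (simp add: sum.If_cases)
    then show "(\<Sum>\<sigma>::'w\<Rightarrow>bool\<in>UNIV. PW A \<beta> W * (if sat p q W \<sigma> then 1 else 0)) = PW A \<beta> W * Ncnt p q W"
      by (simp add: Ncnt_def flip: sum_distrib_left)
  qed
  finally show ?thesis .
qed

lemma PW_nonneg:
  assumes "\<And>e. e \<in> A \<Longrightarrow> 0 \<le> \<beta> e \<and> \<beta> e \<le> 1" "W \<subseteq> A"
  shows "PW A \<beta> W \<ge> 0"
  unfolding PW_def using assms by (intro mult_nonneg_nonneg prod_nonneg) auto

lemma PW_lattice: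
  assumes fin: "finite A"
    and b1: "\<And>e. e \<in> A \<Longrightarrow> 0 \<le> \<beta> e \<and> \<beta> e \<le> 1"
    and b2: "\<And>e. e \<in> A \<Longrightarrow> 0 \<le> \<gamma> e \<and> \<gamma> e \<le> 1"
    and X: "X \<subseteq> A" and Y: "Y \<subseteq> A"
  shows "PW A \<beta> X * PW A \<gamma> Y \<le> PW A (\<lambda>e. min (\<beta> e) (\<gamma> e)) (X \<union> Y) * PW A (\<lambda>e. max (\<beta> e) (\<gamma> e)) (X \<inter> Y)"
proof -
  define f where "f = (\<lambda>e. (if e \<in> X then 1 - \<beta> e else \<beta> e) * (if e \<in> Y then 1 - \<gamma> e else \<gamma> e))"
  define g where "g = (\<lambda>e. (if e \<in> X \<union> Y then 1 - min (\<beta> e) (\<gamma> e) else min (\<beta> e) (\<gamma> e)) * (if e \<in> X \<inter> Y then 1 - max (\<beta> e) (\<gamma> e) else max (\<beta> e) (\<gamma> e)))"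
  have gen: "PW A \<delta> Z = (\<Prod>e\<in>A. if e \<in> Z then 1 - \<delta> e else \<delta> e)" if "Z \<subseteq> A" for \<delta> Z
  proof -
    have "(\<Prod>e\<in>A. if e \<in> Z then 1 - \<delta> e else \<delta> e) = (\<Prod>e\<in>A \<inter> Z. 1 - \<delta> e) * (\<Prod>e\<in>A - Z. \<delta> e)"
      using fin by (simp add: prod.If_cases Diff_eq)
    moreover have "A \<inter> Z = Z" using that by auto
    ultimately show ?thesis by (simp add: PW_def)
  qed
  have "PW A \<beta> X * PW A \<gamma> Y = (\<Prod>e\<in>A. f e)"
    using X Y by (simp add: gen f_def prod.distrib)
  also have "\<dots> \<le> (\<Prod>e\<in>A. g e)"
  proof (rule prod_mono)
    fix e assume e: "e \<in> A"
    have bd: "0 \<le> \<beta> e" "\<beta> e \<le> 1" "0 \<le> \<gamma> e" "\<gamma> e \<le> 1" using b1[OF e] b2[OF e] by auto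
    have aux: "\<And>x y::real. x \<le> y \<Longrightarrow> x*(1-y) \<le> (1-x)*y" by (simp add: algebra_simps)
    show "0 \<le> f e \<and> f e \<le> g e"
      using aux bd unfolding f_def g_def by (cases "e \<in> X"; cases "e \<in> Y") (auto simp: min_def max_def intro: mult_mono mult_nonneg_nonneg aux)
  qed
  also have "\<dots> = PW A (\<lambda>e. min (\<beta> e) (\<gamma> e)) (X \<union> Y) * PW A (\<lambda>e. max (\<beta> e) (\<gamma> e)) (X \<inter> Y)"
  proof -
    have g1: "PW A (\<lambda>e. min (\<beta> e) (\<gamma> e)) (X \<union> Y) = (\<Prod>e\<in>A. if e \<in> X \<union> Y then 1 - min (\<beta> e) (\<gamma> e) else min (\<beta> e) (\<gamma> e))"
      by (rule gen) (use X Y in auto)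
    have g2: "PW A (\<lambda>e. max (\<beta> e) (\<gamma> e)) (X \<inter> Y) = (\<Prod>e\<in>A. if e \<in> X \<inter> Y then 1 - max (\<beta> e) (\<gamma> e) else max (\<beta> e) (\<gamma> e))"
      by (rule gen) (use X Y in auto)
    show ?thesis unfolding g1 g2 g_def by (rule prod.distrib)
  qed
  finally show ?thesis .
qed

lemma Zf_lattice:
  fixes p q :: "'a \<Rightarrow> 'w::finite"
  assumes fin: "finite A"
    and b1: "\<And>e. e \<in> A \<Longrightarrow> 0 \<le> \<beta> e \<and> \<beta> e \<le> 1"
    and b2: "\<And>e. e \<in> A \<Longrightarrow> 0 \<le> \<gamma> e \<and> \<gamma> e \<le> 1"
  shows "Zf p q A \<beta> * Zf p q A \<gamma> \<le> Zf p q A (\<lambda>e. min (\<beta> e) (\<gamma> e)) * Zf p q A (\<lambda>e. max (\<beta> e) (\<gamma> e))"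
  unfolding Zf_ES[OF fin]
proof (rule four_functions[OF fin])
  have bmin: "\<And>e. e \<in> A \<Longrightarrow> 0 \<le> min (\<beta> e) (\<gamma> e) \<and> min (\<beta> e) (\<gamma> e) \<le> 1"
    and bmax: "\<And>e. e \<in> A \<Longrightarrow> 0 \<le> max (\<beta> e) (\<gamma> e) \<and> max (\<beta> e) (\<gamma> e) \<le> 1"
    using b1 b2 by (auto simp: min_def max_def)
  note N = Ncnt_pos[of p q, THEN less_imp_le]
  fix X assume X: "X \<subseteq> A"
  show "0 \<le> PW A \<beta> X * Ncnt p q X" "0 \<le> PW A \<gamma> X * Ncnt p q X"
    "0 \<le> PW A (\<lambda>e. min (\<beta> e) (\<gamma> e)) X * Ncnt p q X" "0 \<le> PW A (\<lambda>e. max (\<beta> e) (\<gamma> e)) X * Ncnt p q X"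
    using PW_nonneg[OF b1 X] PW_nonneg[OF b2 X] PW_nonneg[OF bmin X] PW_nonneg[OF bmax X] N
    by (auto intro: mult_nonneg_nonneg)
next
  note N = Ncnt_pos[of p q, THEN less_imp_le]
  fix X Y assume X: "X \<subseteq> A" and Y: "Y \<subseteq> A"
  have "PW A \<beta> X * Ncnt p q X * (PW A \<gamma> Y * Ncnt p q Y) = (PW A \<beta> X * PW A \<gamma> Y) * (Ncnt p q X * Ncnt p q Y)"
    by (simp add: algebra_simps)
  also have "\<dots> \<le> (PW A (\<lambda>e. min (\<beta> e) (\<gamma> e)) (X \<union> Y) * PW A (\<lambda>e. max (\<beta> e) (\<gamma> e)) (X \<inter> Y)) * (Ncnt p q (X \<union> Y) * Ncnt p q (X \<inter> Y))"
  proof (rule mult_mono)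
    show "PW A \<beta> X * PW A \<gamma> Y \<le> PW A (\<lambda>e. min (\<beta> e) (\<gamma> e)) (X \<union> Y) * PW A (\<lambda>e. max (\<beta> e) (\<gamma> e)) (X \<inter> Y)"
      by (rule PW_lattice[OF fin b1 b2 X Y])
    show "Ncnt p q X * Ncnt p q Y \<le> Ncnt p q (X \<union> Y) * Ncnt p q (X \<inter> Y)"
      by (rule Ncnt_supermod) (use Y fin finite_subset in auto)
    have "0 \<le> PW A (\<lambda>e. min (\<beta> e) (\<gamma> e)) (X \<union> Y)" "0 \<le> PW A (\<lambda>e. max (\<beta> e) (\<gamma> e)) (X \<inter> Y)"
      using b1 b2 X Y by (auto intro!: PW_nonneg simp: min_def max_def)
    then show "0 \<le> PW A (\<lambda>e. min (\<beta> e) (\<gamma> e)) (X \<union> Y) * PW A (\<lambda>e. max (\<beta> e) (\<gamma> e)) (X \<inter> Y)" by simp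
    show "0 \<le> Ncnt p q X * Ncnt p q Y" using N by simp
  qed
  also have "\<dots> = PW A (\<lambda>e. min (\<beta> e) (\<gamma> e)) (X \<union> Y) * Ncnt p q (X \<union> Y) * (PW A (\<lambda>e. max (\<beta> e) (\<gamma> e)) (X \<inter> Y) * Ncnt p q (X \<inter> Y))"
    by (simp add: algebra_simps)
  finally show "PW A \<beta> X * Ncnt p q X * (PW A \<gamma> Y * Ncnt p q Y) \<le> PW A (\<lambda>e. min (\<beta> e) (\<gamma> e)) (X \<union> Y) * Ncnt p q (X \<union> Y) * (PW A (\<lambda>e. max (\<beta> e) (\<gamma> e)) (X \<inter> Y) * Ncnt p q (X \<inter> Y))" .
qed

lemma Zf_mono:
  fixes p q :: "'a \<Rightarrow> 'w::finite"
  assumes "\<And>e. e \<in> A \<Longrightarrow> 0 \<le> \<beta> e \<and> \<beta> e \<le> \<gamma> e"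
  shows "Zf p q A \<beta> \<le> Zf p q A \<gamma>"
  unfolding Zf_def using assms by (intro sum_mono prod_mono) auto

lemma Zf_nonneg:
  assumes "\<And>e. e \<in> A \<Longrightarrow> 0 \<le> \<beta> e"
  shows "Zf p q A \<beta> \<ge> 0"
  unfolding Zf_def using assms by (intro sum_nonneg prod_nonneg) auto


definition Tbox :: "nat \<Rightarrow> ('v \<Rightarrow> nat) set" where
  "Tbox K = {t. \<forall>v. t v \<le> K}"

definition encT :: "('v \<Rightarrow> nat) \<Rightarrow> ('v \<times> nat) set" where
  "encT t = {(v,k). 1 \<le> k \<and> k \<le> t v}"

lemma finite_Tbox: "finite (Tbox K :: ('v::finite \<Rightarrow> nat) set)"
proof -
  have "Tbox K = {f. \<forall>x. (x \<in> (UNIV::'v set) \<longrightarrow> f x \<in> {..K}) \<and> (x \<notin> UNIV \<longrightarrow> f x = 0)}"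
    by (auto simp: Tbox_def)
  show ?thesis unfolding \<open>Tbox K = _\<close> by (rule finite_set_of_finite_funs) auto
qed

lemma encT_inj: "inj encT"
proof (rule injI)
  fix t s :: "'v \<Rightarrow> nat" assume eq: "encT t = encT s"
  show "t = s"
  proof
    fix v
    show "t v = s v"
    proof (rule ccontr)
      assume "t v \<noteq> s v"
      then consider "t v < s v" | "s v < t v" by linarith
      then show False
      proof cases
        case 1
        then have "(v, s v) \<in> encT s" "(v, s v) \<notin> encT t" by (auto simp: encT_def)
        with eq show False by simp
      next
        case 2
        then have "(v, t v) \<in> encT t" "(v, t v) \<notin> encT s" by (auto simp: encT_def)
        with eq show False by simp
      qed
    qed
  qed
qed

lemma encT_max: "encT (\<lambda>v. max (t v) (s v)) = encT t \<union> encT s"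
  by (auto simp: encT_def)

lemma encT_min: "encT (\<lambda>v. min (t v) (s v)) = encT t \<inter> encT s"
  by (auto simp: encT_def)

lemma encT_sub: "t \<in> Tbox K \<Longrightarrow> encT t \<subseteq> UNIV \<times> {1..K}"
  by (clarsimp simp: encT_def Tbox_def) (meson le_trans)

lemma four_functions_box:
  fixes f1 f2 f3 f4 :: "('v::finite \<Rightarrow> nat) \<Rightarrow> real"
  assumes nn: "\<And>t. t \<in> Tbox K \<Longrightarrow> f1 t \<ge> 0" "\<And>t. t \<in> Tbox K \<Longrightarrow> f2 t \<ge> 0"
    "\<And>t. t \<in> Tbox K \<Longrightarrow> f3 t \<ge> 0" "\<And>t. t \<in> Tbox K \<Longrightarrow> f4 t \<ge> 0"
    and lat: "\<And>t s. t \<in> Tbox K \<Longrightarrow> s \<in> Tbox K \<Longrightarrow>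
       f1 t * f2 s \<le> f3 (\<lambda>v. max (t v) (s v)) * f4 (\<lambda>v. min (t v) (s v))"
  shows "(\<Sum>t\<in>Tbox K. f1 t) * (\<Sum>t\<in>Tbox K. f2 t) \<le> (\<Sum>t\<in>Tbox K. f3 t) * (\<Sum>t\<in>Tbox K. f4 t)"
proof -
  define U where "U = (UNIV :: 'v set) \<times> {1..K}"
  define I :: "('v \<times> nat) set set" where "I = encT ` Tbox K"
  define iv :: "('v \<times> nat) set \<Rightarrow> 'v \<Rightarrow> nat" where "iv = inv_into (Tbox K) encT"
  define g :: "(('v \<Rightarrow> nat) \<Rightarrow> real) \<Rightarrow> ('v \<times> nat) set \<Rightarrow> real"
    where "g = (\<lambda>f X. if X \<in> I then f (iv X) else (0::real))"
  have fU: "finite U" by (simp add: U_def)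
  have injT: "inj_on encT (Tbox K)" using encT_inj by (rule inj_on_subset) simp
  have ivE: "iv (encT t) = t" if "t \<in> Tbox K" for t
    unfolding iv_def using injT that by (rule inv_into_f_f)
  have IU: "I \<subseteq> Pow U" using encT_sub by (auto simp: I_def U_def)
  have sumg: "(\<Sum>X\<in>Pow U. g f X) = (\<Sum>t\<in>Tbox K. f t)" for f
  proof -
    have "(\<Sum>X\<in>Pow U. g f X) = (\<Sum>X\<in>I. f (iv X))"
      unfolding g_def using IU fU by (simp add: sum.If_cases Int_absorb1)
    also have "\<dots> = (\<Sum>t\<in>Tbox K. f (iv (encT t)))"
      unfolding I_def by (rule sum.reindex[OF injT, unfolded comp_def])
    also have "\<dots> = (\<Sum>t\<in>Tbox K. f t)" by (rule sum.cong) (simp_all add: ivE)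
    finally show ?thesis .
  qed
  have maxT: "(\<lambda>v. max (t v) (s v)) \<in> Tbox K" and minT: "(\<lambda>v. min (t v) (s v)) \<in> Tbox K"
    if "t \<in> Tbox K" "s \<in> Tbox K" for t s using that unfolding Tbox_def by (auto simp: min_le_iff_disj)
  have "(\<Sum>X\<in>Pow U. g f1 X) * (\<Sum>X\<in>Pow U. g f2 X) \<le> (\<Sum>X\<in>Pow U. g f3 X) * (\<Sum>X\<in>Pow U. g f4 X)"
  proof (rule four_functions[OF fU])
    fix X assume "X \<subseteq> U"
    show "g f1 X \<ge> 0" "g f2 X \<ge> 0" "g f3 X \<ge> 0" "g f4 X \<ge> 0"
      unfolding g_def I_def using nn by (auto simp: ivE)
  next
    fix X Y assume "X \<subseteq> U" "Y \<subseteq> U"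
    show "g f1 X * g f2 Y \<le> g f3 (X \<union> Y) * g f4 (X \<inter> Y)"
    proof (cases "X \<in> I \<and> Y \<in> I")
      case True
      then obtain t s where t: "t \<in> Tbox K" "X = encT t" and s: "s \<in> Tbox K" "Y = encT s"
        by (auto simp: I_def)
      have "X \<union> Y = encT (\<lambda>v. max (t v) (s v))" "X \<inter> Y = encT (\<lambda>v. min (t v) (s v))"
        using t s by (simp_all add: encT_max encT_min)
      then have "X \<union> Y \<in> I" "X \<inter> Y \<in> I" "iv (X \<union> Y) = (\<lambda>v. max (t v) (s v))" "iv (X \<inter> Y) = (\<lambda>v. min (t v) (s v))"
        using maxT[OF t(1) s(1)] minT[OF t(1) s(1)] by (simp_all add: I_def ivE)
      then show ?thesis using True t s lat[OF t(1) s(1)] by (simp add: g_def ivE)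
    next
      case False
      have "g f3 (X \<union> Y) \<ge> 0" "g f4 (X \<inter> Y) \<ge> 0"
        unfolding g_def I_def using nn by (auto simp: ivE)
      then show ?thesis using False by (auto simp: g_def)
    qed
  qed
  then show ?thesis by (simp add: sumg)
qed


definition ep1 :: "'v set \<Rightarrow> 'v" where "ep1 e = (SOME u. u \<in> e)"
definition ep2 :: "'v set \<Rightarrow> 'v" where "ep2 e = (SOME v. v \<in> e \<and> v \<noteq> ep1 e)"

lemma ep_props:
  assumes "card e = 2"
  shows "ep1 e \<in> e" "ep2 e \<in> e" "ep1 e \<noteq> ep2 e" "e = {ep1 e, ep2 e}"
proof -
  obtain x y where xy: "e = {x, y}" "x \<noteq> y" using assms by (auto simp: card_2_iff)
  have "\<exists>u. u \<in> e" using xy by auto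
  then show 1: "ep1 e \<in> e" unfolding ep1_def by (rule someI_ex)
  have "\<exists>v. v \<in> e \<and> v \<noteq> ep1 e" using xy 1 by auto
  then have 2: "ep2 e \<in> e \<and> ep2 e \<noteq> ep1 e" unfolding ep2_def by (rule someI_ex)
  then show "ep2 e \<in> e" "ep1 e \<noteq> ep2 e" by auto
  show "e = {ep1 e, ep2 e}" using 1 2 xy by auto
qed

lemma edge_forall:
  assumes "card e = 2" and sym: "\<And>v w. P v w \<longleftrightarrow> P w v"
  shows "(\<forall>v w. e = {v, w} \<longrightarrow> P v w) \<longleftrightarrow> P (ep1 e) (ep2 e)"
proof -
  note ep = ep_props[OF assms(1)]
  show ?thesis
  proof
    assume "\<forall>v w. e = {v, w} \<longrightarrow> P v w" then show "P (ep1 e) (ep2 e)" using ep(4) by blast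
  next
    assume P: "P (ep1 e) (ep2 e)"
    show "\<forall>v w. e = {v, w} \<longrightarrow> P v w"
    proof (intro allI impI)
      fix v w assume "e = {v, w}"
      then have "(v = ep1 e \<and> w = ep2 e) \<or> (v = ep2 e \<and> w = ep1 e)" using ep(4) by (auto simp: doubleton_eq_iff)
      then show "P v w" using P sym by auto
    qed
  qed
qed

lemma edge_exists:
  assumes "card e = 2"
  shows "(\<exists>v w. e = {v, w} \<and> h v = h w) \<longleftrightarrow> h (ep1 e) = h (ep2 e)"
proof -
  note ep = ep_props[OF assms(1)]
  show ?thesis
  proof
    assume "\<exists>v w. e = {v, w} \<and> h v = h w"
    then obtain v w where "e = {v, w}" "h v = h w" by blast
    moreover then have "(v = ep1 e \<and> w = ep2 e) \<or> (v = ep2 e \<and> w = ep1 e)" using ep(4) by (auto simp: doubleton_eq_iff)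
    ultimately show "h (ep1 e) = h (ep2 e)" by auto
  next
    assume "h (ep1 e) = h (ep2 e)" then show "\<exists>v w. e = {v, w} \<and> h v = h w" using ep(4) by blast
  qed
qed

lemma prod_if_zero:
  assumes "finite A"
  shows "(\<Prod>e\<in>A. if P e then f e else (0::real)) = (if \<forall>e\<in>A. P e then \<Prod>e\<in>A. f e else 0)"
proof (cases "\<forall>e\<in>A. P e")
  case True
  have "(\<Prod>e\<in>A. if P e then f e else (0::real)) = (\<Prod>e\<in>A. f e)"
    by (rule prod.cong) (use True in auto)
  then show ?thesis using True by simp
next
  case False
  then obtain e where "e \<in> A" "\<not> P e" by blast
  then have "(\<Prod>e\<in>A. if P e then f e else (0::real)) = 0"
    by (intro prod_zero assms) auto
  then show ?thesis using False by presburger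
qed

definition sg :: "('v \<Rightarrow> bool) \<Rightarrow> ('v \<Rightarrow> int) \<Rightarrow> 'v \<Rightarrow> int" where
  "sg \<sigma> n = (\<lambda>v. if \<sigma> v then n v else - n v)"

definition absf :: "('v \<Rightarrow> int) \<Rightarrow> 'v \<Rightarrow> int" where
  "absf h = (\<lambda>v. \<bar>h v\<bar>)"

definition mu :: "'v set set \<Rightarrow> ('v set \<Rightarrow> real) \<Rightarrow> 'v set \<Rightarrow> ('v \<Rightarrow> int set) \<Rightarrow> ('v \<Rightarrow> int) \<Rightarrow> real" where
  "mu E c \<Delta> \<xi> n = (\<Sum>h\<in>{h\<in>admissible E \<Delta> \<xi>. absf h = n}. weight E c h)"

definition Cfac :: "'v set set \<Rightarrow> ('v set \<Rightarrow> real) \<Rightarrow> ('v \<Rightarrow> int) \<Rightarrow> real" where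
  "Cfac E c n = (\<Prod>e\<in>E. if n (ep1 e) = n (ep2 e) then c e else 1)"

definition lipn :: "'v set set \<Rightarrow> ('v \<Rightarrow> int) \<Rightarrow> bool" where
  "lipn E n \<longleftrightarrow> (\<forall>e\<in>E. \<bar>n (ep1 e) - n (ep2 e)\<bar> \<le> 2)"

definition boxn :: "'v set \<Rightarrow> ('v \<Rightarrow> int) \<Rightarrow> ('v \<Rightarrow> int) \<Rightarrow> ('v \<Rightarrow> int) \<Rightarrow> bool" where
  "boxn \<Delta> a b n \<longleftrightarrow> (\<forall>x\<in>\<Delta>. a x \<le> n x \<and> n x \<le> b x)"

definition betaE :: "('v set \<Rightarrow> real) \<Rightarrow> ('v \<Rightarrow> int) \<Rightarrow> 'v set \<Rightarrow> real" where
  "betaE c n e = (if n (ep1 e) = 1 \<and> n (ep2 e) = 1 then 1 / c e else 0)"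

definition betaG :: "'v set \<Rightarrow> ('v \<Rightarrow> int) \<Rightarrow> ('v \<Rightarrow> int) \<Rightarrow> 'v \<Rightarrow> real" where
  "betaG S a n x = (if x \<in> S \<and> \<not> (n x = 1 \<and> a x = -1) then 0 else 1)"

definition beta :: "('v set \<Rightarrow> real) \<Rightarrow> 'v set \<Rightarrow> ('v \<Rightarrow> int) \<Rightarrow> ('v \<Rightarrow> int) \<Rightarrow> 'v set + 'v \<Rightarrow> real" where
  "beta c S a n = case_sum (betaE c n) (betaG S a n)"

definition pp :: "'v set + 'v \<Rightarrow> 'v option" where
  "pp = case_sum (\<lambda>e. Some (ep1 e)) (\<lambda>x. Some x)"

definition qq :: "'v set + 'v \<Rightarrow> 'v option" where
  "qq = case_sum (\<lambda>e. Some (ep2 e)) (\<lambda>x. None)"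

definition AA :: "'v set set \<Rightarrow> ('v set + 'v) set" where
  "AA E = Inl ` E \<union> range Inr"

definition extb :: "('v \<Rightarrow> bool) \<Rightarrow> 'v option \<Rightarrow> bool" where
  "extb \<sigma> = (\<lambda>z. case z of None \<Rightarrow> True | Some v \<Rightarrow> \<sigma> v)"

lemma edge_factor:
  fixes n1 n2 :: int and c :: real and s1 s2 :: bool
  assumes "odd n1" "odd n2" "n1 \<ge> 1" "n2 \<ge> 1" "c \<ge> 1"
  defines "h1 \<equiv> (if s1 then n1 else - n1)" and "h2 \<equiv> (if s2 then n2 else - n2)"
  shows "(if \<bar>h1 - h2\<bar> \<le> 2 then (if h1 = h2 then c else 1) else 0)
       = (if \<bar>n1 - n2\<bar> \<le> 2 then (if n1 = n2 then c else 1) else 0) *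
         (if s1 = s2 then 1 else (if n1 = 1 \<and> n2 = 1 then 1 / c else 0))"
proof (cases "s1 = s2")
  case True
  then show ?thesis unfolding h1_def h2_def by (cases s1) (auto simp: abs_minus_commute)
next
  case False
  have c0: "c \<noteq> 0" using assms by auto
  have "\<bar>h1 - h2\<bar> = n1 + n2" "h1 \<noteq> h2"
    using False assms(3,4) unfolding h1_def h2_def by (cases s1; auto)+
  moreover have "n1 + n2 \<le> 2 \<longleftrightarrow> n1 = 1 \<and> n2 = 1" using assms(3,4) by auto
  ultimately show ?thesis using False c0 by auto
qed

lemma vertex_factor_S:
  fixes n a b :: int
  assumes "odd n" "n \<ge> 1" "-1 \<le> a" "a \<le> b" "a + b \<ge> 2"
  shows "(if (if s then n else - n) \<in> odd_interval a b then 1 else 0::real)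
      = (if a \<le> n \<and> n \<le> b then 1 else 0) * (if s then 1 else (if \<not> (n = 1 \<and> a = -1) then 0 else 1))"
proof (cases s)
  case True then show ?thesis using assms by (auto simp: odd_interval_def)
next
  case False
  have "(- n \<in> odd_interval a b) \<longleftrightarrow> (n = 1 \<and> a = -1)"
    using assms by (auto simp: odd_interval_def)
  then show ?thesis using False assms by auto
qed

lemma vertex_factor_nS:
  fixes n a b :: int
  assumes "odd n" "n \<ge> 1" "1 \<le> a" "a \<le> b"
  shows "((if s then n else - n) \<in> pm_interval a b) \<longleftrightarrow> (a \<le> n \<and> n \<le> b)"
  using assms by (cases s) (auto simp: pm_interval_def odd_interval_def)


lemma beta_simps[simp]: "beta c S a n (Inl e) = betaE c n e" "beta c S a n (Inr x) = betaG S a n x"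
  by (simp_all add: beta_def)

lemma extb_simps[simp]: "extb \<sigma> (Some v) = \<sigma> v" "extb \<sigma> None = True"
  by (simp_all add: extb_def)

lemma finite_all[simp]: "finite (A :: ('a::finite) set)" by simp

lemma mu_sigma:
  fixes n :: "('v::finite) \<Rightarrow> int"
  assumes "\<And>v. n v \<ge> 1"
  shows "mu E c \<Delta> \<xi> n = (\<Sum>\<sigma>\<in>UNIV. if sg \<sigma> n \<in> admissible E \<Delta> \<xi> then weight E c (sg \<sigma> n) else 0)"
proof -
  define P where "P = {\<sigma>. sg \<sigma> n \<in> admissible E \<Delta> \<xi>}"
  have inj: "inj_on (\<lambda>\<sigma>. sg \<sigma> n) P"
  proof (rule inj_onI)
    fix \<sigma> \<tau> assume eq: "sg \<sigma> n = sg \<tau> n"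
    show "\<sigma> = \<tau>"
    proof
      fix v
      have "sg \<sigma> n v = sg \<tau> n v" using eq by simp
      then show "\<sigma> v = \<tau> v" using assms[of v] unfolding sg_def by (auto split: if_splits)
    qed
  qed
  have img: "(\<lambda>\<sigma>. sg \<sigma> n) ` P = {h\<in>admissible E \<Delta> \<xi>. absf h = n}"
  proof
    show "(\<lambda>\<sigma>. sg \<sigma> n) ` P \<subseteq> {h\<in>admissible E \<Delta> \<xi>. absf h = n}"
    proof clarify
      fix \<sigma> assume "\<sigma> \<in> P"
      moreover have "absf (sg \<sigma> n) = n"
      proof (rule ext)
        fix v show "absf (sg \<sigma> n) v = n v" using assms[of v] by (simp add: absf_def sg_def)
      qed
      ultimately show "sg \<sigma> n \<in> admissible E \<Delta> \<xi> \<and> absf (sg \<sigma> n) = n" by (simp add: P_def)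
    qed
  next
    show "{h\<in>admissible E \<Delta> \<xi>. absf h = n} \<subseteq> (\<lambda>\<sigma>. sg \<sigma> n) ` P"
    proof (rule subsetI)
      fix h assume hh: "h \<in> {h\<in>admissible E \<Delta> \<xi>. absf h = n}"
      then have h: "h \<in> admissible E \<Delta> \<xi>" and hn: "absf h = n" by auto
      define \<sigma> where "\<sigma> = (\<lambda>v. h v > 0)"
      have "sg \<sigma> n = h"
      proof (rule ext)
        fix v
        have "n v = \<bar>h v\<bar>" using hn by (auto simp: absf_def)
        then show "sg \<sigma> n v = h v" by (auto simp: sg_def \<sigma>_def)
      qed
      then show "h \<in> (\<lambda>\<sigma>. sg \<sigma> n) ` P" using h by (auto simp: P_def image_iff)
    qed
  qed
  have "mu E c \<Delta> \<xi> n = (\<Sum>\<sigma>\<in>P. weight E c (sg \<sigma> n))"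
    unfolding mu_def img[symmetric] by (subst sum.reindex[OF inj]) simp
  also have "\<dots> = (\<Sum>\<sigma>\<in>UNIV. if sg \<sigma> n \<in> admissible E \<Delta> \<xi> then weight E c (sg \<sigma> n) else 0)"
    unfolding P_def by (subst sum.inter_filter[symmetric]) simp_all
  finally show ?thesis .
qed

lemma per_sigma:
  fixes E :: "('v::finite) set set"
  assumes sg2: "simple_graph E" and bc: "abs_bc E \<Delta> \<xi> S a b" and cpos: "\<forall>e\<in>E. c e \<ge> 1"
    and n: "\<And>v. odd (n v) \<and> n v \<ge> 1"
  shows "(if sg \<sigma> n \<in> admissible E \<Delta> \<xi> then weight E c (sg \<sigma> n) else 0)
    = (if lipn E n \<and> boxn \<Delta> a b n then Cfac E c n else 0) *
      ((\<Prod>e\<in>E. if \<sigma> (ep1 e) = \<sigma> (ep2 e) then 1 else betaE c n e) *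
       (\<Prod>x\<in>UNIV. if \<sigma> x then 1 else betaG S a n x))"
proof -
  define h where "h = sg \<sigma> n"
  have card2: "\<And>e. e \<in> E \<Longrightarrow> card e = 2" using sg2 by (simp add: simple_graph_def)
  have oddh: "\<forall>v. odd (h v)" using n by (simp add: h_def sg_def)
  have hf: "height_fun E h \<longleftrightarrow> (\<forall>e\<in>E. \<bar>h (ep1 e) - h (ep2 e)\<bar> \<le> 2)"
    unfolding height_fun_def using oddh edge_forall[OF card2, where P="\<lambda>v w. \<bar>h v - h w\<bar> \<le> 2"]
    by (simp add: abs_minus_commute)
  have W: "weight E c h = (\<Prod>e\<in>E. if h (ep1 e) = h (ep2 e) then c e else 1)"
    unfolding weight_def by (rule prod.cong) (simp_all add: edge_exists[OF card2])
  have adm: "h \<in> admissible E \<Delta> \<xi> \<longleftrightarrow> (\<forall>e\<in>E. \<bar>h (ep1 e) - h (ep2 e)\<bar> \<le> 2) \<and> (\<forall>x\<in>UNIV. x \<in> \<Delta> \<longrightarrow> h x \<in> \<xi> x)"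
    unfolding admissible_def mem_Collect_eq hf by blast
  have LHS: "(if h \<in> admissible E \<Delta> \<xi> then weight E c h else 0)
     = (\<Prod>e\<in>E. if \<bar>h (ep1 e) - h (ep2 e)\<bar> \<le> 2 then (if h (ep1 e) = h (ep2 e) then c e else 1) else 0) *
       (\<Prod>x\<in>UNIV. if x \<in> \<Delta> \<longrightarrow> h x \<in> \<xi> x then 1 else 0)"
    unfolding prod_if_zero[OF finite_all] adm W
    by (cases "\<forall>e\<in>E. \<bar>h (ep1 e) - h (ep2 e)\<bar> \<le> 2"; cases "\<forall>x\<in>UNIV. x \<in> \<Delta> \<longrightarrow> h x \<in> \<xi> x"; simp del: prod_zero_iff; blast)
  have e_eq: "(\<Prod>e\<in>E. if \<bar>h (ep1 e) - h (ep2 e)\<bar> \<le> 2 then (if h (ep1 e) = h (ep2 e) then c e else 1) else 0)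
     = (\<Prod>e\<in>E. (if \<bar>n (ep1 e) - n (ep2 e)\<bar> \<le> 2 then (if n (ep1 e) = n (ep2 e) then c e else 1) else 0) *
                 (if \<sigma> (ep1 e) = \<sigma> (ep2 e) then 1 else betaE c n e))"
  proof (rule prod.cong[OF refl])
    fix e assume "e \<in> E"
    then have "c e \<ge> 1" using cpos by auto
    then show "(if \<bar>h (ep1 e) - h (ep2 e)\<bar> \<le> 2 then (if h (ep1 e) = h (ep2 e) then c e else 1) else 0)
      = (if \<bar>n (ep1 e) - n (ep2 e)\<bar> \<le> 2 then (if n (ep1 e) = n (ep2 e) then c e else 1) else 0) *
        (if \<sigma> (ep1 e) = \<sigma> (ep2 e) then 1 else betaE c n e)"
      unfolding h_def sg_def betaE_def using n edge_factor by blast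
  qed
  have lip_eq: "(\<Prod>e\<in>E. (if \<bar>n (ep1 e) - n (ep2 e)\<bar> \<le> 2 then (if n (ep1 e) = n (ep2 e) then c e else 1) else 0))
     = (if lipn E n then Cfac E c n else 0)"
    unfolding prod_if_zero[OF finite_all] lipn_def Cfac_def by simp
  have v_eq: "(if x \<in> \<Delta> \<longrightarrow> h x \<in> \<xi> x then 1 else 0)
     = (if x \<in> \<Delta> \<longrightarrow> a x \<le> n x \<and> n x \<le> b x then 1 else (0::real)) * (if \<sigma> x then 1 else betaG S a n x)" for x
  proof -
    have SD: "S \<subseteq> \<Delta>" using bc by (simp add: abs_bc_def)
    consider "x \<in> S" | "x \<in> \<Delta> - S" | "x \<notin> \<Delta>" by blast
    then show ?thesis
    proof cases
      case 1
      then have props: "\<xi> x = odd_interval (a x) (b x)" "-1 \<le> a x" "a x \<le> b x" "a x + b x \<ge> 2"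
        using bc by (auto simp: abs_bc_def)
      show ?thesis using vertex_factor_S[OF _ _ props(2-4), of "n x" "\<sigma> x"] n[of x] 1 SD props(1)
        by (auto simp: h_def sg_def betaG_def)
    next
      case 2
      then have props: "\<xi> x = pm_interval (a x) (b x)" "1 \<le> a x" "a x \<le> b x"
        using bc by (auto simp: abs_bc_def)
      show ?thesis using vertex_factor_nS[OF _ _ props(2-3), of "n x" "\<sigma> x"] n[of x] 2 props(1)
        by (auto simp: h_def sg_def betaG_def)
    next
      case 3
      then show ?thesis using SD by (auto simp: betaG_def)
    qed
  qed
  have box_eq: "(\<Prod>x\<in>UNIV. if x \<in> \<Delta> \<longrightarrow> a x \<le> n x \<and> n x \<le> b x then 1 else (0::real)) = (if boxn \<Delta> a b n then 1 else 0)"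
    unfolding prod_if_zero[OF finite_all] boxn_def by auto
  have "(if h \<in> admissible E \<Delta> \<xi> then weight E c h else 0)
     = (\<Prod>e\<in>E. (if \<bar>n (ep1 e) - n (ep2 e)\<bar> \<le> 2 then (if n (ep1 e) = n (ep2 e) then c e else 1) else 0) *
                 (if \<sigma> (ep1 e) = \<sigma> (ep2 e) then 1 else betaE c n e)) *
       (\<Prod>x\<in>UNIV. (if x \<in> \<Delta> \<longrightarrow> a x \<le> n x \<and> n x \<le> b x then 1 else (0::real)) * (if \<sigma> x then 1 else betaG S a n x))"
    unfolding LHS e_eq v_eq ..
  also have "\<dots> = (if lipn E n then Cfac E c n else 0) * (\<Prod>e\<in>E. if \<sigma> (ep1 e) = \<sigma> (ep2 e) then 1 else betaE c n e) *
       ((if boxn \<Delta> a b n then 1 else 0) * (\<Prod>x\<in>UNIV. if \<sigma> x then 1 else betaG S a n x))"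
    by (simp only: prod.distrib lip_eq box_eq)
  also have "\<dots> = (if lipn E n \<and> boxn \<Delta> a b n then Cfac E c n else 0) *
      ((\<Prod>e\<in>E. if \<sigma> (ep1 e) = \<sigma> (ep2 e) then 1 else betaE c n e) *
       (\<Prod>x\<in>UNIV. if \<sigma> x then 1 else betaG S a n x))"
    by simp
  finally show ?thesis unfolding h_def .
qed

definition Phi :: "('v set + 'v) set \<Rightarrow> ('v set + 'v \<Rightarrow> real) \<Rightarrow> ('v option \<Rightarrow> bool) \<Rightarrow> real" where
  "Phi A \<beta> \<tau> = (\<Prod>e\<in>A. if \<tau> (pp e) = \<tau> (qq e) then 1 else \<beta> e)"

lemma Zf_half:
  fixes A :: "(('v::finite) set + 'v) set"
  shows "Zf pp qq A \<beta> = 2 * (\<Sum>\<sigma>\<in>UNIV. Phi A \<beta> (extb \<sigma>))"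
proof -
  define T where "T = {\<tau> :: 'v option \<Rightarrow> bool. \<tau> None}"
  define ng where "ng = (\<lambda>(\<tau> :: 'v option \<Rightarrow> bool) z. \<not> \<tau> z)"
  have U: "UNIV = T \<union> ng ` T"
  proof -
    have "\<tau> \<in> ng ` T" if "\<not> \<tau> None" for \<tau>
      using that by (auto simp: T_def ng_def image_iff intro!: exI[of _ "ng \<tau>"])
    then show ?thesis by (auto simp: T_def ng_def)
  qed
  have disj: "T \<inter> ng ` T = {}" by (auto simp: T_def ng_def)
  have injn: "inj_on ng T" by (rule inj_onI) (auto simp: ng_def fun_eq_iff)
  have Phin: "Phi A \<beta> (ng \<tau>) = Phi A \<beta> \<tau>" for \<tau> unfolding Phi_def ng_def by simp
  have "Zf pp qq A \<beta> = (\<Sum>\<tau>\<in>UNIV. Phi A \<beta> \<tau>)" by (simp add: Zf_def Phi_def)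
  also have "\<dots> = (\<Sum>\<tau>\<in>T. Phi A \<beta> \<tau>) + (\<Sum>\<tau>\<in>ng ` T. Phi A \<beta> \<tau>)"
    by (subst U, rule sum.union_disjoint) (simp_all add: disj)
  also have "(\<Sum>\<tau>\<in>ng ` T. Phi A \<beta> \<tau>) = (\<Sum>\<tau>\<in>T. Phi A \<beta> \<tau>)"
    by (simp add: sum.reindex[OF injn] Phin)
  also have "(\<Sum>\<tau>\<in>T. Phi A \<beta> \<tau>) = (\<Sum>\<sigma>\<in>UNIV. Phi A \<beta> (extb \<sigma>))"
  proof -
    have inje: "inj (extb :: ('v \<Rightarrow> bool) \<Rightarrow> _)"
    proof (rule injI)
      fix \<sigma> \<tau> :: "'v \<Rightarrow> bool" assume "extb \<sigma> = extb \<tau>"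
      then have "\<forall>v. extb \<sigma> (Some v) = extb \<tau> (Some v)" by simp
      then show "\<sigma> = \<tau>" by auto
    qed
    have "T = range extb"
    proof
      show "range extb \<subseteq> T" by (auto simp: T_def extb_def)
      show "T \<subseteq> range extb"
      proof
        fix \<tau> assume "\<tau> \<in> T"
        then have "\<tau> = extb (\<lambda>v. \<tau> (Some v))" by (auto simp: T_def extb_def fun_eq_iff split: option.split)
        then show "\<tau> \<in> range extb" by blast
      qed
    qed
    then show ?thesis by (simp add: sum.reindex[OF inje])
  qed
  finally show ?thesis by simp
qed

lemma Phi_split:
  fixes E :: "('v::finite) set set"
  shows "Phi (AA E) (beta c S a n) (extb \<sigma>) =
     (\<Prod>e\<in>E. if \<sigma> (ep1 e) = \<sigma> (ep2 e) then 1 else betaE c n e) *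
     (\<Prod>x\<in>UNIV. if \<sigma> x then 1 else betaG S a n x)"
proof -
  have "Phi (AA E) (beta c S a n) (extb \<sigma>) =
     (\<Prod>e\<in>Inl ` E. if extb \<sigma> (pp e) = extb \<sigma> (qq e) then 1 else beta c S a n e) *
     (\<Prod>e\<in>range Inr. if extb \<sigma> (pp e) = extb \<sigma> (qq e) then 1 else beta c S a n e)"
    unfolding Phi_def AA_def by (rule prod.union_disjoint) auto
  also have "\<dots> = (\<Prod>e\<in>E. if \<sigma> (ep1 e) = \<sigma> (ep2 e) then 1 else betaE c n e) *
     (\<Prod>x\<in>UNIV. if \<sigma> x then 1 else betaG S a n x)"
    apply (simp add: prod.reindex pp_def qq_def)
    apply (simp only: beta_simps)
    done
  finally show ?thesis .
qed


lemma odd_between: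
  fixes k m1 m2 :: int
  assumes "odd k" "odd m1" "odd m2" "m1 \<noteq> m2" "\<bar>m1 - m2\<bar> \<le> 2"
  shows "max k m1 = max k m2 \<or> min k m1 = min k m2"
  using assms unfolding max_def min_def by presburger

lemma cfac_edge:
  fixes n1 n2 m1 m2 :: int and c :: real
  assumes "odd n1" "odd n2" "odd m1" "odd m2" "\<bar>n1 - n2\<bar> \<le> 2" "\<bar>m1 - m2\<bar> \<le> 2" "c \<ge> 1"
  shows "(if n1 = n2 then c else 1) * (if m1 = m2 then c else 1)
     \<le> (if max n1 m1 = max n2 m2 then c else 1) * (if min n1 m1 = min n2 m2 then c else 1)"
proof -
  have c1: "c * c \<ge> c" "c \<ge> 1" "c * c \<ge> 1" using assms(7) mult_mono[of 1 c 1 c] mult_right_mono[of 1 c c] by auto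
  consider "n1 = n2 \<and> m1 = m2" | "n1 = n2 \<and> m1 \<noteq> m2" | "n1 \<noteq> n2 \<and> m1 = m2" | "n1 \<noteq> n2 \<and> m1 \<noteq> m2" by blast
  then show ?thesis
  proof cases
    case 1 then show ?thesis by simp
  next
    case 2
    then have "max n1 m1 = max n2 m2 \<or> min n1 m1 = min n2 m2"
      using odd_between[of n1 m1 m2] assms by auto
    then show ?thesis using 2 c1 by auto
  next
    case 3
    then have "max m1 n1 = max m2 n2 \<or> min m1 n1 = min m2 n2"
      using odd_between[of m1 n1 n2] assms by auto
    then have "max n1 m1 = max n2 m2 \<or> min n1 m1 = min n2 m2" by (simp add: max.commute min.commute)
    then show ?thesis using 3 c1 by auto
  next
    case 4 then show ?thesis using c1 by auto
  qed
qed

lemma weight_nonneg: "\<forall>e\<in>E. c e \<ge> 1 \<Longrightarrow> weight E c h \<ge> 0"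
  unfolding weight_def by (intro prod_nonneg) (auto intro: order_trans[of 0 1])

lemma mu_nonneg: "\<forall>e\<in>E. c e \<ge> 1 \<Longrightarrow> mu E c \<Delta> \<xi> n \<ge> 0"
  unfolding mu_def by (intro sum_nonneg weight_nonneg)

lemma decomp:
  fixes E :: "('v::finite) set set"
  assumes "simple_graph E" and bc: "abs_bc E \<Delta> \<xi> S a b" and cpos: "\<forall>e\<in>E. c e \<ge> 1"
    and n: "\<And>v. odd (n v) \<and> n v \<ge> 1"
  shows "2 * mu E c \<Delta> \<xi> n = (if lipn E n \<and> boxn \<Delta> a b n then Cfac E c n else 0) * Zf pp qq (AA E) (beta c S a n)"
proof -
  have "mu E c \<Delta> \<xi> n = (\<Sum>\<sigma>\<in>UNIV. (if lipn E n \<and> boxn \<Delta> a b n then Cfac E c n else 0) * Phi (AA E) (beta c S a n) (extb \<sigma>))"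
    unfolding mu_sigma[of n, OF conjunct2[OF n]] Phi_split per_sigma[OF assms] ..
  then have "mu E c \<Delta> \<xi> n = (if lipn E n \<and> boxn \<Delta> a b n then Cfac E c n else 0) * (\<Sum>\<sigma>\<in>UNIV. Phi (AA E) (beta c S a n) (extb \<sigma>))"
    by (simp add: sum_distrib_left)
  then show ?thesis by (simp add: Zf_half)
qed

lemma absf_props:
  assumes "h \<in> admissible E \<Delta> \<xi>"
  shows "odd (\<bar>h v\<bar>) \<and> \<bar>h v\<bar> \<ge> 1"
proof -
  have "odd (h v)" using assms by (auto simp: admissible_def height_fun_def)
  then have "h v \<noteq> 0" by auto
  then show ?thesis using \<open>odd (h v)\<close> by auto
qed

lemma mu_pos_props:
  assumes "mu E c \<Delta> \<xi> n \<noteq> 0"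
  shows "\<forall>v. odd (n v) \<and> n v \<ge> 1"
proof -
  have "{h\<in>admissible E \<Delta> \<xi>. absf h = n} \<noteq> {}" using assms unfolding mu_def by (metis sum.empty)
  then obtain h where h: "h \<in> admissible E \<Delta> \<xi>" and hn: "absf h = n" by auto
  show ?thesis
  proof
    fix v
    have "n v = \<bar>h v\<bar>" using hn by (auto simp: absf_def)
    then show "odd (n v) \<and> n v \<ge> 1" using absf_props[OF h, of v] by simp
  qed
qed

lemma betaE_bounds: "c e \<ge> 1 \<Longrightarrow> 0 \<le> betaE c n e \<and> betaE c n e \<le> 1"
  by (auto simp: betaE_def)

lemma betaG_bounds: "0 \<le> betaG S a n x \<and> betaG S a n x \<le> 1"
  by (auto simp: betaG_def)

lemma beta_bounds:
  assumes "\<forall>e\<in>E. c e \<ge> 1" "z \<in> AA E"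
  shows "0 \<le> beta c S a n z \<and> beta c S a n z \<le> 1"
proof -
  consider e where "e \<in> E" "z = Inl e" | x where "z = Inr x" using assms(2) by (auto simp: AA_def)
  then show ?thesis
  proof cases
    case 1 then show ?thesis using betaE_bounds[of c e n] assms(1) by simp
  next
    case 2 then show ?thesis using betaG_bounds[of S a n x] by simp
  qed
qed


lemma max_eq1: "(n1::int) \<ge> 1 \<Longrightarrow> m1 \<ge> 1 \<Longrightarrow> max n1 m1 = 1 \<longleftrightarrow> n1 = 1 \<and> m1 = 1" by auto
lemma min_eq1: "(n1::int) \<ge> 1 \<Longrightarrow> m1 \<ge> 1 \<Longrightarrow> min n1 m1 = 1 \<longleftrightarrow> n1 = 1 \<or> m1 = 1" by auto

lemma vertex_compat:
  fixes E :: "('v::finite) set set"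
  assumes bc1: "abs_bc E \<Delta> \<xi>1 S1 a1 b1" and bc2: "abs_bc E \<Delta> \<xi>2 S2 a2 b2"
    and le: "abs_le \<Delta> S2 a2 b2 S1 a1 b1"
    and n1: "n x \<ge> 1" and m1: "m x \<ge> 1"
    and bn: "x \<in> \<Delta> \<longrightarrow> a1 x \<le> n x \<and> n x \<le> b1 x" and bm: "x \<in> \<Delta> \<longrightarrow> a2 x \<le> m x \<and> m x \<le> b2 x"
  shows "x \<in> \<Delta> \<longrightarrow> a1 x \<le> max (n x) (m x) \<and> max (n x) (m x) \<le> b1 x"
    and "x \<in> \<Delta> \<longrightarrow> a2 x \<le> min (n x) (m x) \<and> min (n x) (m x) \<le> b2 x"
    and "min (betaG S1 a1 n x) (betaG S2 a2 m x) \<le> betaG S1 a1 (\<lambda>v. max (n v) (m v)) x"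
    and "max (betaG S1 a1 n x) (betaG S2 a2 m x) \<le> betaG S2 a2 (\<lambda>v. min (n v) (m v)) x"
proof -
  have S1D: "S1 \<subseteq> \<Delta>" and S2D: "S2 \<subseteq> \<Delta>" using bc1 bc2 by (auto simp: abs_bc_def)
  have S21: "S2 \<subseteq> S1" using le by (simp add: abs_le_def)
  consider "x \<notin> \<Delta>" | "x \<in> S2" | "x \<in> \<Delta> - S1" | "x \<in> S1 - S2" using S21 by blast
  then have "(x \<in> \<Delta> \<longrightarrow> a1 x \<le> max (n x) (m x) \<and> max (n x) (m x) \<le> b1 x) \<and>
    (x \<in> \<Delta> \<longrightarrow> a2 x \<le> min (n x) (m x) \<and> min (n x) (m x) \<le> b2 x) \<and>
    min (betaG S1 a1 n x) (betaG S2 a2 m x) \<le> betaG S1 a1 (\<lambda>v. max (n v) (m v)) x \<and>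
    max (betaG S1 a1 n x) (betaG S2 a2 m x) \<le> betaG S2 a2 (\<lambda>v. min (n v) (m v)) x"
  proof cases
    case 1
    then have "x \<notin> S1" "x \<notin> S2" using S1D S2D by auto
    then show ?thesis using 1 by (simp add: betaG_def)
  next
    case 2
    then have x1: "x \<in> S1" "x \<in> \<Delta>" using S21 S2D by auto
    have le2: "a2 x \<le> a1 x" "b2 x \<le> b1 x" using le 2 by (auto simp: abs_le_def)
    have p2: "-1 \<le> a2 x" using bc2 2 by (auto simp: abs_bc_def)
    show ?thesis using x1 2 le2 p2 bn bm n1 m1 by (auto simp: betaG_def max_def min_def)
  next
    case 3
    then have x1: "x \<notin> S1" "x \<notin> S2" "x \<in> \<Delta>" using S21 by auto
    have le2: "a2 x \<le> a1 x" "b2 x \<le> b1 x" using le 3 by (auto simp: abs_le_def)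
    show ?thesis using x1 le2 bn bm by (auto simp: betaG_def max_def min_def)
  next
    case 4
    then have x1: "x \<in> S1" "x \<notin> S2" "x \<in> \<Delta>" using S1D by auto
    have le3: "b2 x \<le> \<bar>a1 x\<bar>" using le 4 by (auto simp: abs_le_def)
    have p1: "-1 \<le> a1 x" "a1 x \<le> b1 x" "a1 x + b1 x \<ge> 2" using bc1 x1 by (auto simp: abs_bc_def)
    have p2: "1 \<le> a2 x" "a2 x \<le> b2 x" using bc2 x1 by (auto simp: abs_bc_def)
    have A: "a1 x \<le> max (n x) (m x) \<and> max (n x) (m x) \<le> b1 x"
      using le3 p1 p2 bn bm x1 n1 m1 by (cases "a1 x \<ge> 0") (auto simp: max_def)
    have B: "a2 x \<le> min (n x) (m x) \<and> min (n x) (m x) \<le> b2 x"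
      using le3 p1 p2 bn bm x1 n1 m1 by (cases "a1 x \<ge> 0") (auto simp: min_def)
    have C: "min (betaG S1 a1 n x) (betaG S2 a2 m x) \<le> betaG S1 a1 (\<lambda>v. max (n v) (m v)) x"
    proof (cases "n x = 1 \<and> a1 x = -1")
      case True
      then have "m x \<le> 1" using le3 bm x1 by auto
      then have "max (n x) (m x) = 1" using True m1 by auto
      then show ?thesis using True by (simp add: betaG_def)
    next
      case False
      then show ?thesis using x1 by (simp add: betaG_def)
    qed
    have D: "max (betaG S1 a1 n x) (betaG S2 a2 m x) \<le> betaG S2 a2 (\<lambda>v. min (n v) (m v)) x"
      using x1 by (auto simp: betaG_def)
    show ?thesis using A B C D x1 by blast
  qed
  then show "x \<in> \<Delta> \<longrightarrow> a1 x \<le> max (n x) (m x) \<and> max (n x) (m x) \<le> b1 x"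
    and "x \<in> \<Delta> \<longrightarrow> a2 x \<le> min (n x) (m x) \<and> min (n x) (m x) \<le> b2 x"
    and "min (betaG S1 a1 n x) (betaG S2 a2 m x) \<le> betaG S1 a1 (\<lambda>v. max (n v) (m v)) x"
    and "max (betaG S1 a1 n x) (betaG S2 a2 m x) \<le> betaG S2 a2 (\<lambda>v. min (n v) (m v)) x"
    by blast+
qed

lemma edge_compat:
  assumes "\<forall>v. n v \<ge> (1::int)" "\<forall>v. m v \<ge> 1" "c e \<ge> 1"
  shows "min (betaE c n e) (betaE c m e) \<le> betaE c (\<lambda>v. max (n v) (m v)) e"
    and "max (betaE c n e) (betaE c m e) \<le> betaE c (\<lambda>v. min (n v) (m v)) e"
  using assms max_eq1[of "n (ep1 e)" "m (ep1 e)"] max_eq1[of "n (ep2 e)" "m (ep2 e)"]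
    min_eq1[of "n (ep1 e)" "m (ep1 e)"] min_eq1[of "n (ep2 e)" "m (ep2 e)"]
  by (auto simp: betaE_def)


lemma lip_max_min:
  assumes "lipn E n" "lipn E m"
  shows "lipn E (\<lambda>v. max (n v) (m v))" "lipn E (\<lambda>v. min (n v) (m v))"
  using assms unfolding lipn_def by (auto simp: abs_le_iff max_def min_def)

lemma Cfac_lattice:
  fixes E :: "('v::finite) set set"
  assumes cpos: "\<forall>e\<in>E. c e \<ge> 1" and lip: "lipn E n" "lipn E m"
    and odd: "\<forall>v. odd (n v)" "\<forall>v. odd (m v)"
  shows "Cfac E c n * Cfac E c m \<le> Cfac E c (\<lambda>v. max (n v) (m v)) * Cfac E c (\<lambda>v. min (n v) (m v))"
proof -
  have "Cfac E c n * Cfac E c m = (\<Prod>e\<in>E. (if n (ep1 e) = n (ep2 e) then c e else 1) * (if m (ep1 e) = m (ep2 e) then c e else 1))"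
    unfolding Cfac_def by (simp add: prod.distrib)
  also have "\<dots> \<le> (\<Prod>e\<in>E. (if max (n (ep1 e)) (m (ep1 e)) = max (n (ep2 e)) (m (ep2 e)) then c e else 1) *
       (if min (n (ep1 e)) (m (ep1 e)) = min (n (ep2 e)) (m (ep2 e)) then c e else 1))"
  proof (rule prod_mono)
    fix e assume e: "e \<in> E"
    have ce: "c e \<ge> 1" using cpos e by auto
    show "0 \<le> (if n (ep1 e) = n (ep2 e) then c e else 1) * (if m (ep1 e) = m (ep2 e) then c e else 1) \<and>
      (if n (ep1 e) = n (ep2 e) then c e else 1) * (if m (ep1 e) = m (ep2 e) then c e else 1)
      \<le> (if max (n (ep1 e)) (m (ep1 e)) = max (n (ep2 e)) (m (ep2 e)) then c e else 1) *
         (if min (n (ep1 e)) (m (ep1 e)) = min (n (ep2 e)) (m (ep2 e)) then c e else 1)"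
      using cfac_edge[of "n (ep1 e)" "n (ep2 e)" "m (ep1 e)" "m (ep2 e)" "c e"] ce odd lip e
      by (auto simp: lipn_def)
  qed
  also have "\<dots> = Cfac E c (\<lambda>v. max (n v) (m v)) * Cfac E c (\<lambda>v. min (n v) (m v))"
    unfolding Cfac_def by (simp add: prod.distrib)
  finally show ?thesis .
qed

lemma Cfac_nonneg: "\<forall>e\<in>E. c e \<ge> 1 \<Longrightarrow> Cfac E c n \<ge> 0"
  unfolding Cfac_def by (intro prod_nonneg) (auto intro: order_trans[of 0 1])

lemma mu_lattice:
  fixes E :: "('v::finite) set set"
  assumes sgE: "simple_graph E" and cpos: "\<forall>e\<in>E. c e \<ge> 1"
    and bc1: "abs_bc E \<Delta> \<xi>1 S1 a1 b1" and bc2: "abs_bc E \<Delta> \<xi>2 S2 a2 b2"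
    and le: "abs_le \<Delta> S2 a2 b2 S1 a1 b1"
  shows "mu E c \<Delta> \<xi>1 n * mu E c \<Delta> \<xi>2 m \<le> mu E c \<Delta> \<xi>1 (\<lambda>v. max (n v) (m v)) * mu E c \<Delta> \<xi>2 (\<lambda>v. min (n v) (m v))"
proof (cases "mu E c \<Delta> \<xi>1 n = 0 \<or> mu E c \<Delta> \<xi>2 m = 0")
  case True
  then show ?thesis using mu_nonneg[OF cpos] by (auto intro: mult_nonneg_nonneg)
next
  case False
  define N where "N = (\<lambda>v. max (n v) (m v))"
  define M where "M = (\<lambda>v. min (n v) (m v))"
  have np: "\<forall>v. odd (n v) \<and> n v \<ge> 1" using False mu_pos_props by blast
  have mp: "\<forall>v. odd (m v) \<and> m v \<ge> 1" using False mu_pos_props by blast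
  have Np: "\<And>v. odd (N v) \<and> N v \<ge> 1" using np mp by (auto simp: N_def max_def)
  have Mp: "\<And>v. odd (M v) \<and> M v \<ge> 1" using np mp by (auto simp: M_def min_def)
  note d1n = decomp[OF sgE bc1 cpos, of n] and d2m = decomp[OF sgE bc2 cpos, of m]
  note d1N = decomp[OF sgE bc1 cpos Np] and d2M = decomp[OF sgE bc2 cpos Mp]
  have hn: "lipn E n \<and> boxn \<Delta> a1 b1 n" using d1n np False by (cases "lipn E n \<and> boxn \<Delta> a1 b1 n") auto
  have hm: "lipn E m \<and> boxn \<Delta> a2 b2 m" using d2m mp False by (cases "lipn E m \<and> boxn \<Delta> a2 b2 m") auto
  have lipN: "lipn E N" and lipM: "lipn E M" using lip_max_min hn hm by (auto simp: N_def M_def)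
  have vc: "\<And>x. (x \<in> \<Delta> \<longrightarrow> a1 x \<le> N x \<and> N x \<le> b1 x) \<and> (x \<in> \<Delta> \<longrightarrow> a2 x \<le> M x \<and> M x \<le> b2 x) \<and>
    min (betaG S1 a1 n x) (betaG S2 a2 m x) \<le> betaG S1 a1 N x \<and>
    max (betaG S1 a1 n x) (betaG S2 a2 m x) \<le> betaG S2 a2 M x"
  proof -
    fix x
    have bn: "x \<in> \<Delta> \<longrightarrow> a1 x \<le> n x \<and> n x \<le> b1 x" and bm: "x \<in> \<Delta> \<longrightarrow> a2 x \<le> m x \<and> m x \<le> b2 x"
      using hn hm by (auto simp: boxn_def)
    have nm1: "n x \<ge> 1" "m x \<ge> 1" using np mp by auto
    show "?thesis x"
      using vertex_compat[where n=n and m=m and x=x, OF bc1 bc2 le nm1 bn bm] unfolding N_def M_def by blast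
  qed
  have boxN: "boxn \<Delta> a1 b1 N" and boxM: "boxn \<Delta> a2 b2 M" using vc by (auto simp: boxn_def)
  have e1: "2 * mu E c \<Delta> \<xi>1 n = Cfac E c n * Zf pp qq (AA E) (beta c S1 a1 n)" using d1n np hn by simp
  have e2: "2 * mu E c \<Delta> \<xi>2 m = Cfac E c m * Zf pp qq (AA E) (beta c S2 a2 m)" using d2m mp hm by simp
  have e3: "2 * mu E c \<Delta> \<xi>1 N = Cfac E c N * Zf pp qq (AA E) (beta c S1 a1 N)" using d1N lipN boxN by simp
  have e4: "2 * mu E c \<Delta> \<xi>2 M = Cfac E c M * Zf pp qq (AA E) (beta c S2 a2 M)" using d2M lipM boxM by simp
  have C: "Cfac E c n * Cfac E c m \<le> Cfac E c N * Cfac E c M"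
    unfolding N_def M_def using Cfac_lattice[OF cpos] hn hm np mp by blast
  have fA: "finite (AA E)" by simp
  have bb: "\<And>S a k z. z \<in> AA E \<Longrightarrow> 0 \<le> beta c S a k z \<and> beta c S a k z \<le> 1"
    using beta_bounds[OF cpos] by blast
  have Zl: "Zf pp qq (AA E) (beta c S1 a1 n) * Zf pp qq (AA E) (beta c S2 a2 m)
     \<le> Zf pp qq (AA E) (\<lambda>z. min (beta c S1 a1 n z) (beta c S2 a2 m z)) * Zf pp qq (AA E) (\<lambda>z. max (beta c S1 a1 n z) (beta c S2 a2 m z))"
    by (rule Zf_lattice[OF fA]) (use bb in auto)
  have pw: "min (beta c S1 a1 n z) (beta c S2 a2 m z) \<le> beta c S1 a1 N z \<and>
            max (beta c S1 a1 n z) (beta c S2 a2 m z) \<le> beta c S2 a2 M z" if z: "z \<in> AA E" for z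
  proof -
    consider e where "e \<in> E" "z = Inl e" | x where "z = Inr x" using z by (auto simp: AA_def)
    then show ?thesis
    proof cases
      case 1
      have "c e \<ge> 1" using cpos 1 by auto
      then show ?thesis using 1 edge_compat[of n m c e] np mp unfolding N_def M_def by auto
    next
      case 2 then show ?thesis using vc by simp
    qed
  qed
  have Z1: "Zf pp qq (AA E) (\<lambda>z. min (beta c S1 a1 n z) (beta c S2 a2 m z)) \<le> Zf pp qq (AA E) (beta c S1 a1 N)"
    by (rule Zf_mono) (use bb pw in \<open>auto simp: min_def\<close>)
  have Z2: "Zf pp qq (AA E) (\<lambda>z. max (beta c S1 a1 n z) (beta c S2 a2 m z)) \<le> Zf pp qq (AA E) (beta c S2 a2 M)"
    by (rule Zf_mono) (use bb pw in \<open>auto simp: max_def\<close>)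
  have Zn: "\<And>S a k. Zf pp qq (AA E) (beta c S a k) \<ge> 0" by (rule Zf_nonneg) (use bb in auto)
  have Zmn: "Zf pp qq (AA E) (\<lambda>z. max (beta c S1 a1 n z) (beta c S2 a2 m z)) \<ge> 0"
    by (rule Zf_nonneg) (use bb in \<open>auto simp: max_def\<close>)
  have Z: "Zf pp qq (AA E) (beta c S1 a1 n) * Zf pp qq (AA E) (beta c S2 a2 m) \<le> Zf pp qq (AA E) (beta c S1 a1 N) * Zf pp qq (AA E) (beta c S2 a2 M)"
    using Zl mult_mono[OF Z1 Z2 Zn[of S1 a1 N] Zmn] by linarith
  have "(2 * mu E c \<Delta> \<xi>1 n) * (2 * mu E c \<Delta> \<xi>2 m) = (Cfac E c n * Cfac E c m) * (Zf pp qq (AA E) (beta c S1 a1 n) * Zf pp qq (AA E) (beta c S2 a2 m))"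
    unfolding e1 e2 by (simp add: algebra_simps)
  also have "\<dots> \<le> (Cfac E c N * Cfac E c M) * (Zf pp qq (AA E) (beta c S1 a1 N) * Zf pp qq (AA E) (beta c S2 a2 M))"
    by (rule mult_mono[OF C Z]) (use Cfac_nonneg[OF cpos] Zn in auto)
  also have "\<dots> = (2 * mu E c \<Delta> \<xi>1 N) * (2 * mu E c \<Delta> \<xi>2 M)"
    unfolding e3 e4 by (simp add: algebra_simps)
  finally show ?thesis unfolding N_def M_def by simp
qed


lemma relpow_bound:
  assumes hf: "height_fun E h"
  shows "((\<lambda>x y. {x, y} \<in> E) ^^ k) x0 v \<Longrightarrow> \<bar>h v - h x0\<bar> \<le> 2 * int k"
proof (induction k arbitrary: v)
  case 0 then show ?case by simp
next
  case (Suc k)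
  then obtain u where u: "((\<lambda>x y. {x, y} \<in> E) ^^ k) x0 u" "{u, v} \<in> E" by auto
  have "\<bar>h u - h v\<bar> \<le> 2" using hf u(2) unfolding height_fun_def by blast
  then show ?case using Suc.IH[OF u(1)] by auto
qed

lemma adm_bounded:
  fixes E :: "('v::finite) set set"
  assumes conn: "graph_connected E" and bc: "boundary_cond E \<Delta> \<xi>" and ne: "\<Delta> \<noteq> {}"
  shows "\<exists>B::int. \<forall>h\<in>admissible E \<Delta> \<xi>. \<forall>v. \<bar>h v\<bar> \<le> B"
proof -
  obtain x0 where x0: "x0 \<in> \<Delta>" using ne by auto
  have fin: "finite (\<xi> x0)" "\<xi> x0 \<noteq> {}" using bc x0 by (auto simp: boundary_cond_def)
  define M0 where "M0 = Max (abs ` \<xi> x0)"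
  have M0: "\<And>k. k \<in> \<xi> x0 \<Longrightarrow> \<bar>k\<bar> \<le> M0" unfolding M0_def using fin by auto
  define kk where "kk = (\<lambda>v. SOME k. ((\<lambda>x y. {x, y} \<in> E) ^^ k) x0 v)"
  have kk: "((\<lambda>x y. {x, y} \<in> E) ^^ kk v) x0 v" for v
  proof -
    have "((\<lambda>x y. {x, y} \<in> E)\<^sup>*\<^sup>*) x0 v" using conn by (simp add: graph_connected_def)
    then have "\<exists>k. ((\<lambda>x y. {x, y} \<in> E) ^^ k) x0 v" by (rule rtranclp_imp_relpowp)
    then show ?thesis unfolding kk_def by (rule someI_ex)
  qed
  define Kb where "Kb = Max (range kk)"
  have Kb: "kk v \<le> Kb" for v unfolding Kb_def by simp
  show ?thesis
  proof (intro exI ballI allI)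
    fix h v assume h: "h \<in> admissible E \<Delta> \<xi>"
    have hf: "height_fun E h" and hx0: "h x0 \<in> \<xi> x0" using h x0 by (auto simp: admissible_def)
    have "\<bar>h v - h x0\<bar> \<le> 2 * int (kk v)" by (rule relpow_bound[OF hf kk])
    moreover have "\<bar>h x0\<bar> \<le> M0" using M0 hx0 by auto
    moreover have "int (kk v) \<le> int Kb" using Kb by simp
    ultimately show "\<bar>h v\<bar> \<le> M0 + 2 * int Kb" by linarith
  qed
qed

lemma finite_bounded_funs:
  fixes B :: int
  shows "finite {h :: ('v::finite) \<Rightarrow> int. \<forall>v. \<bar>h v\<bar> \<le> B}"
proof -
  have "{h :: 'v \<Rightarrow> int. \<forall>v. \<bar>h v\<bar> \<le> B} = {f. \<forall>x. (x \<in> UNIV \<longrightarrow> f x \<in> {-B..B}) \<and> (x \<notin> UNIV \<longrightarrow> f x = 0)}"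
    by (auto simp: abs_le_iff minus_le_iff)
  also have "finite \<dots>" by (rule finite_set_of_finite_funs) auto
  finally show ?thesis .
qed

lemma weight_pos: "\<forall>e\<in>E. c e \<ge> 1 \<Longrightarrow> finite E \<Longrightarrow> weight E c h \<ge> 1"
  unfolding weight_def by (rule prod_ge_1) auto

definition ntof :: "('v \<Rightarrow> nat) \<Rightarrow> 'v \<Rightarrow> int" where
  "ntof t = (\<lambda>v. 2 * int (t v) + 1)"

definition tof :: "('v \<Rightarrow> int) \<Rightarrow> 'v \<Rightarrow> nat" where
  "tof n = (\<lambda>v. nat ((n v - 1) div 2))"

lemma ntof_max: "ntof (\<lambda>v. max (t v) (s v)) = (\<lambda>v. max (ntof t v) (ntof s v))"
  by (auto simp: ntof_def max_def)

lemma ntof_min: "ntof (\<lambda>v. min (t v) (s v)) = (\<lambda>v. min (ntof t v) (ntof s v))"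
  by (auto simp: ntof_def min_def)

lemma group_sum:
  fixes E :: "('v::finite) set set"
  assumes bnd: "\<forall>h\<in>admissible E \<Delta> \<xi>. \<forall>v. \<bar>h v\<bar> \<le> 2 * int K + 1"
  shows "(\<Sum>h\<in>admissible E \<Delta> \<xi>. weight E c h * \<phi> (\<lambda>v. \<bar>h v\<bar>)) = (\<Sum>t\<in>Tbox K. mu E c \<Delta> \<xi> (ntof t) * \<phi> (ntof t))"
proof -
  have finA: "finite (admissible E \<Delta> \<xi>)"
    by (rule finite_subset[OF _ finite_bounded_funs[of "2 * int K + 1"]]) (use bnd in auto)
  define g :: "('v \<Rightarrow> int) \<Rightarrow> 'v \<Rightarrow> nat" where "g = (\<lambda>h. tof (absf h))"
  have oddh: "odd (h v) \<and> h v \<noteq> 0" if "h \<in> admissible E \<Delta> \<xi>" for h v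
  proof -
    have "odd (h v)" using that by (auto simp: admissible_def height_fun_def)
    moreover then have "h v \<noteq> 0" by (metis even_zero)
    ultimately show ?thesis by blast
  qed
  have gT: "g ` admissible E \<Delta> \<xi> \<subseteq> Tbox K"
  proof clarify
    fix h assume h: "h \<in> admissible E \<Delta> \<xi>"
    have "(\<bar>h v\<bar> - 1) div 2 \<le> int K" for v
    proof -
      have "\<bar>h v\<bar> \<le> 2 * int K + 1" using bnd h by blast
      then have "(\<bar>h v\<bar> - 1) div 2 \<le> (2 * int K) div 2" by (intro zdiv_mono1) auto
      then show ?thesis by simp
    qed
    then show "g h \<in> Tbox K" unfolding Tbox_def g_def tof_def absf_def
      by (auto simp: nat_le_iff)
  qed
  have gi: "{h \<in> admissible E \<Delta> \<xi>. g h = t} = {h \<in> admissible E \<Delta> \<xi>. absf h = ntof t}" for t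
  proof -
    have "g h = t \<longleftrightarrow> absf h = ntof t" if h: "h \<in> admissible E \<Delta> \<xi>" for h
    proof -
      have "(nat ((\<bar>h v\<bar> - 1) div 2) = t v) \<longleftrightarrow> (\<bar>h v\<bar> = 2 * int (t v) + 1)" for v
      proof -
        have oa: "odd \<bar>h v\<bar>" using oddh[OF h, of v] by (cases "h v \<ge> 0") auto
        define j where "j = \<bar>h v\<bar> div 2"
        have j: "\<bar>h v\<bar> = 2 * j + 1" "j \<ge> 0" using oa unfolding j_def
          by (simp_all add: odd_two_times_div_two_succ pos_imp_zdiv_nonneg_iff)
        show ?thesis using j by auto
      qed
      then show ?thesis unfolding g_def tof_def absf_def ntof_def fun_eq_iff by simp
    qed
    then show ?thesis by auto
  qed
  have "(\<Sum>h\<in>admissible E \<Delta> \<xi>. weight E c h * \<phi> (\<lambda>v. \<bar>h v\<bar>))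
      = (\<Sum>t\<in>Tbox K. \<Sum>h\<in>{h \<in> admissible E \<Delta> \<xi>. g h = t}. weight E c h * \<phi> (\<lambda>v. \<bar>h v\<bar>))"
    by (rule sum.group[symmetric, OF finA finite_Tbox gT])
  also have "\<dots> = (\<Sum>t\<in>Tbox K. mu E c \<Delta> \<xi> (ntof t) * \<phi> (ntof t))"
  proof (rule sum.cong[OF refl])
    fix t
    have "(\<Sum>h\<in>{h \<in> admissible E \<Delta> \<xi>. g h = t}. weight E c h * \<phi> (\<lambda>v. \<bar>h v\<bar>))
        = (\<Sum>h\<in>{h \<in> admissible E \<Delta> \<xi>. absf h = ntof t}. weight E c h * \<phi> (ntof t))"
      unfolding gi by (rule sum.cong) (auto simp: absf_def)
    also have "\<dots> = mu E c \<Delta> \<xi> (ntof t) * \<phi> (ntof t)"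
      by (simp add: mu_def sum_distrib_right)
    finally show "(\<Sum>h\<in>{h \<in> admissible E \<Delta> \<xi>. g h = t}. weight E c h * \<phi> (\<lambda>v. \<bar>h v\<bar>)) = mu E c \<Delta> \<xi> (ntof t) * \<phi> (ntof t)" .
  qed
  finally show ?thesis .
qed


definition Sx :: "'v set set \<Rightarrow> ('v set \<Rightarrow> real) \<Rightarrow> 'v set \<Rightarrow> ('v \<Rightarrow> int set) \<Rightarrow> nat \<Rightarrow> (('v \<Rightarrow> int) \<Rightarrow> real) \<Rightarrow> real" where
  "Sx E c \<Delta> \<xi> K \<phi> = (\<Sum>t\<in>Tbox K. mu E c \<Delta> \<xi> (ntof t) * \<phi> (ntof t))"

lemma Sx_shift: "Sx E c \<Delta> \<xi> K (\<lambda>n. \<phi> n - \<alpha>) = Sx E c \<Delta> \<xi> K \<phi> - \<alpha> * Sx E c \<Delta> \<xi> K (\<lambda>_. 1)"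
  unfolding Sx_def by (simp add: algebra_simps sum_subtractf sum_distrib_left)

lemma Sx_shift2: "Sx E c \<Delta> \<xi> K (\<lambda>n. (\<phi> n - \<alpha>) * (\<psi> n - \<gamma>)) =
   Sx E c \<Delta> \<xi> K (\<lambda>n. \<phi> n * \<psi> n) - \<gamma> * Sx E c \<Delta> \<xi> K \<phi> - \<alpha> * Sx E c \<Delta> \<xi> K \<psi> + \<alpha> * \<gamma> * Sx E c \<Delta> \<xi> K (\<lambda>_. 1)"
  unfolding Sx_def by (simp add: algebra_simps sum_subtractf sum.distrib sum_distrib_left)

lemma ntof_ge1: "ntof t v \<ge> 1" by (simp add: ntof_def)

lemma ntof_mono: "(\<forall>v. t v \<le> s v) \<Longrightarrow> ntof t v \<le> ntof s v" by (simp add: ntof_def)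

lemma abs_le_refl: "abs_le \<Delta> S a b S a b" by (simp add: abs_le_def)

lemma fkg_core:
  fixes E :: "('v::finite) set set" and F G :: "('v \<Rightarrow> int) \<Rightarrow> real"
  assumes sgE: "simple_graph E" and cpos: "\<forall>e\<in>E. c e \<ge> 1" and bc: "abs_bc E \<Delta> \<xi> S a b"
    and incF: "increasing_fn F" and incG: "increasing_fn G"
  defines "F0 \<equiv> (\<lambda>n. F n - F (\<lambda>_. 1))" and "G0 \<equiv> (\<lambda>n. G n - G (\<lambda>_. 1))"
  shows "Sx E c \<Delta> \<xi> K F0 * Sx E c \<Delta> \<xi> K G0 \<le> Sx E c \<Delta> \<xi> K (\<lambda>n. F0 n * G0 n) * Sx E c \<Delta> \<xi> K (\<lambda>_. 1)"
proof -
  have F0n: "F0 (ntof t) \<ge> 0" and G0n: "G0 (ntof t) \<ge> 0" for t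
    using incF incG ntof_ge1[of t] unfolding F0_def G0_def increasing_fn_def by auto
  have F0m: "F0 (ntof t) \<le> F0 (ntof s)" and G0m: "G0 (ntof t) \<le> G0 (ntof s)" if "\<forall>v. t v \<le> s v" for t s
    using incF incG ntof_mono[OF that] unfolding F0_def G0_def increasing_fn_def by auto
  note mun = mu_nonneg[OF cpos]
  show ?thesis unfolding Sx_def
  proof (rule four_functions_box)
    fix t :: "'v \<Rightarrow> nat"
    show "0 \<le> mu E c \<Delta> \<xi> (ntof t) * F0 (ntof t)" "0 \<le> mu E c \<Delta> \<xi> (ntof t) * G0 (ntof t)"
      "0 \<le> mu E c \<Delta> \<xi> (ntof t) * (F0 (ntof t) * G0 (ntof t))" "0 \<le> mu E c \<Delta> \<xi> (ntof t) * 1"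
      using mun F0n G0n by auto
  next
    fix t s :: "'v \<Rightarrow> nat"
    define tm where "tm = (\<lambda>v. max (t v) (s v))"
    define tn where "tn = (\<lambda>v. min (t v) (s v))"
    have L: "mu E c \<Delta> \<xi> (ntof t) * mu E c \<Delta> \<xi> (ntof s) \<le> mu E c \<Delta> \<xi> (ntof tm) * mu E c \<Delta> \<xi> (ntof tn)"
      using mu_lattice[OF sgE cpos bc bc abs_le_refl, of "ntof t" "ntof s"] by (simp add: tm_def tn_def ntof_max ntof_min)
    have FG: "F0 (ntof t) * G0 (ntof s) \<le> F0 (ntof tm) * G0 (ntof tm)"
      by (rule mult_mono) (auto intro!: F0m G0m simp: tm_def F0n G0n)
    have "mu E c \<Delta> \<xi> (ntof t) * F0 (ntof t) * (mu E c \<Delta> \<xi> (ntof s) * G0 (ntof s))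
        = (mu E c \<Delta> \<xi> (ntof t) * mu E c \<Delta> \<xi> (ntof s)) * (F0 (ntof t) * G0 (ntof s))" by (simp add: algebra_simps)
    also have "\<dots> \<le> (mu E c \<Delta> \<xi> (ntof tm) * mu E c \<Delta> \<xi> (ntof tn)) * (F0 (ntof tm) * G0 (ntof tm))"
      by (rule mult_mono[OF L FG]) (use mun F0n G0n in auto)
    also have "\<dots> = mu E c \<Delta> \<xi> (ntof tm) * (F0 (ntof tm) * G0 (ntof tm)) * (mu E c \<Delta> \<xi> (ntof tn) * 1)"
      by (simp add: algebra_simps)
    finally show "mu E c \<Delta> \<xi> (ntof t) * F0 (ntof t) * (mu E c \<Delta> \<xi> (ntof s) * G0 (ntof s))
        \<le> mu E c \<Delta> \<xi> (ntof (\<lambda>v. max (t v) (s v))) * (F0 (ntof (\<lambda>v. max (t v) (s v))) * G0 (ntof (\<lambda>v. max (t v) (s v)))) *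
          (mu E c \<Delta> \<xi> (ntof (\<lambda>v. min (t v) (s v))) * 1)" by (simp add: tm_def tn_def)
  qed
qed

lemma holley_core:
  fixes E :: "('v::finite) set set" and F :: "('v \<Rightarrow> int) \<Rightarrow> real"
  assumes sgE: "simple_graph E" and cpos: "\<forall>e\<in>E. c e \<ge> 1" and bc: "abs_bc E \<Delta> \<xi> S a b"
    and bc': "abs_bc E \<Delta> \<xi>' S' a' b'" and le: "abs_le \<Delta> S a b S' a' b'"
    and incF: "increasing_fn F"
  defines "F0 \<equiv> (\<lambda>n. F n - F (\<lambda>_. 1))"
  shows "Sx E c \<Delta> \<xi> K F0 * Sx E c \<Delta> \<xi>' K (\<lambda>_. 1) \<le> Sx E c \<Delta> \<xi>' K F0 * Sx E c \<Delta> \<xi> K (\<lambda>_. 1)"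
proof -
  have F0n: "F0 (ntof t) \<ge> 0" for t
    using incF ntof_ge1[of t] unfolding F0_def increasing_fn_def by auto
  have F0m: "F0 (ntof t) \<le> F0 (ntof s)" if "\<forall>v. t v \<le> s v" for t s
    using incF ntof_mono[OF that] unfolding F0_def increasing_fn_def by auto
  note mun = mu_nonneg[OF cpos]
  show ?thesis unfolding Sx_def
  proof (rule four_functions_box)
    fix t :: "'v \<Rightarrow> nat"
    show "0 \<le> mu E c \<Delta> \<xi> (ntof t) * F0 (ntof t)" "0 \<le> mu E c \<Delta> \<xi>' (ntof t) * 1"
      "0 \<le> mu E c \<Delta> \<xi>' (ntof t) * F0 (ntof t)" "0 \<le> mu E c \<Delta> \<xi> (ntof t) * 1"
      using mun F0n by auto
  next
    fix t s :: "'v \<Rightarrow> nat"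
    define tm where "tm = (\<lambda>v. max (t v) (s v))"
    define tn where "tn = (\<lambda>v. min (t v) (s v))"
    have tm': "(\<lambda>v. max (s v) (t v)) = tm" and tn': "(\<lambda>v. min (s v) (t v)) = tn"
      by (auto simp: tm_def tn_def max.commute min.commute)
    have L: "mu E c \<Delta> \<xi>' (ntof s) * mu E c \<Delta> \<xi> (ntof t) \<le> mu E c \<Delta> \<xi>' (ntof tm) * mu E c \<Delta> \<xi> (ntof tn)"
      using mu_lattice[OF sgE cpos bc' bc le, of "ntof s" "ntof t"] by (simp add: tm'[symmetric] tn'[symmetric] ntof_max ntof_min)
    have Fm: "F0 (ntof t) \<le> F0 (ntof tm)" by (rule F0m) (simp add: tm_def)
    have "mu E c \<Delta> \<xi> (ntof t) * F0 (ntof t) * (mu E c \<Delta> \<xi>' (ntof s) * 1)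
        = (mu E c \<Delta> \<xi>' (ntof s) * mu E c \<Delta> \<xi> (ntof t)) * F0 (ntof t)" by (simp add: algebra_simps)
    also have "\<dots> \<le> (mu E c \<Delta> \<xi>' (ntof tm) * mu E c \<Delta> \<xi> (ntof tn)) * F0 (ntof tm)"
      by (rule mult_mono[OF L Fm]) (use mun F0n in auto)
    also have "\<dots> = mu E c \<Delta> \<xi>' (ntof tm) * F0 (ntof tm) * (mu E c \<Delta> \<xi> (ntof tn) * 1)"
      by (simp add: algebra_simps)
    finally show "mu E c \<Delta> \<xi> (ntof t) * F0 (ntof t) * (mu E c \<Delta> \<xi>' (ntof s) * 1)
        \<le> mu E c \<Delta> \<xi>' (ntof (\<lambda>v. max (t v) (s v))) * F0 (ntof (\<lambda>v. max (t v) (s v))) *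
          (mu E c \<Delta> \<xi> (ntof (\<lambda>v. min (t v) (s v))) * 1)" by (simp add: tm_def tn_def)
  qed
qed

lemma expect_Sx:
  fixes E :: "('v::finite) set set"
  assumes bnd: "\<forall>h\<in>admissible E \<Delta> \<xi>. \<forall>v. \<bar>h v\<bar> \<le> 2 * int K + 1"
  shows "expect E c \<Delta> \<xi> (\<lambda>h. \<phi> (\<lambda>v. \<bar>h v\<bar>)) = Sx E c \<Delta> \<xi> K \<phi> / Sx E c \<Delta> \<xi> K (\<lambda>_. 1)"
proof -
  have n: "(\<Sum>h\<in>admissible E \<Delta> \<xi>. weight E c h * \<phi> (\<lambda>v. \<bar>h v\<bar>)) = Sx E c \<Delta> \<xi> K \<phi>"
    using group_sum[OF bnd] by (simp add: Sx_def)
  have d: "(\<Sum>h\<in>admissible E \<Delta> \<xi>. weight E c h) = Sx E c \<Delta> \<xi> K (\<lambda>_. 1)"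
    using group_sum[OF bnd, of c "\<lambda>_. 1"] by (simp add: Sx_def)
  show ?thesis unfolding expect_def n d ..
qed

lemma Sx_pos:
  fixes E :: "('v::finite) set set"
  assumes cpos: "\<forall>e\<in>E. c e \<ge> 1" and bc: "boundary_cond E \<Delta> \<xi>"
    and bnd: "\<forall>h\<in>admissible E \<Delta> \<xi>. \<forall>v. \<bar>h v\<bar> \<le> 2 * int K + 1"
  shows "Sx E c \<Delta> \<xi> K (\<lambda>_. 1) > 0"
proof -
  obtain h0 where h0: "h0 \<in> admissible E \<Delta> \<xi>" using bc by (auto simp: boundary_cond_def admissible_def)
  have finA: "finite (admissible E \<Delta> \<xi>)"
    by (rule finite_subset[OF _ finite_bounded_funs[of "2 * int K + 1"]]) (use bnd in auto)
  have "1 \<le> weight E c h0" by (rule weight_pos) (use cpos in auto)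
  also have "\<dots> \<le> (\<Sum>h\<in>admissible E \<Delta> \<xi>. weight E c h)"
    by (rule member_le_sum[OF h0]) (use weight_nonneg[OF cpos] finA in auto)
  also have "\<dots> = Sx E c \<Delta> \<xi> K (\<lambda>_. 1)"
    using group_sum[OF bnd, of c "\<lambda>_. 1"] by (simp add: Sx_def)
  finally show ?thesis by simp
qed

theorem proposition4p2:
  fixes E :: "('v::finite) set set" and c :: "'v set \<Rightarrow> real"
    and \<Delta> S S' :: "'v set" and \<xi> \<xi>' :: "'v \<Rightarrow> int set"
    and a b a' b' :: "'v \<Rightarrow> int"
    and F G :: "('v \<Rightarrow> int) \<Rightarrow> real"
  assumes "simple_graph E" and "graph_connected E"
    and "\<forall>e\<in>E. c e \<ge> 1"
    and "\<Delta> \<noteq> {}"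
    and "abs_bc E \<Delta> \<xi> S a b" and "abs_bc E \<Delta> \<xi>' S' a' b'"
    and "abs_le \<Delta> S a b S' a' b'"
    and "increasing_fn F" and "increasing_fn G"
  shows "expect E c \<Delta> \<xi> (\<lambda>h. F (\<lambda>v. \<bar>h v\<bar>) * G (\<lambda>v. \<bar>h v\<bar>))
           \<ge> expect E c \<Delta> \<xi> (\<lambda>h. F (\<lambda>v. \<bar>h v\<bar>)) * expect E c \<Delta> \<xi> (\<lambda>h. G (\<lambda>v. \<bar>h v\<bar>)) \<and>
         expect E c \<Delta> \<xi>' (\<lambda>h. F (\<lambda>v. \<bar>h v\<bar>)) \<ge> expect E c \<Delta> \<xi> (\<lambda>h. F (\<lambda>v. \<bar>h v\<bar>))"
proof -
  note sgE = assms(1) and conn = assms(2) and cpos = assms(3) and ne = assms(4)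
    and bc = assms(5) and bc' = assms(6) and le = assms(7) and incF = assms(8) and incG = assms(9)
  have bcx: "boundary_cond E \<Delta> \<xi>" and bcx': "boundary_cond E \<Delta> \<xi>'" using bc bc' by (auto simp: abs_bc_def)
  obtain B1 where B1: "\<forall>h\<in>admissible E \<Delta> \<xi>. \<forall>v. \<bar>h v\<bar> \<le> B1" using adm_bounded[OF conn bcx ne] by blast
  obtain B2 where B2: "\<forall>h\<in>admissible E \<Delta> \<xi>'. \<forall>v. \<bar>h v\<bar> \<le> B2" using adm_bounded[OF conn bcx' ne] by blast
  define K where "K = nat (max B1 B2)"
  have KB: "max B1 B2 \<le> 2 * int K + 1" unfolding K_def by linarith
  have bnd: "\<forall>h\<in>admissible E \<Delta> \<xi>. \<forall>v. \<bar>h v\<bar> \<le> 2 * int K + 1"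
  proof (intro ballI allI)
    fix h v assume "h \<in> admissible E \<Delta> \<xi>"
    then have "\<bar>h v\<bar> \<le> B1" using B1 by blast
    then show "\<bar>h v\<bar> \<le> 2 * int K + 1" using KB by linarith
  qed
  have bnd': "\<forall>h\<in>admissible E \<Delta> \<xi>'. \<forall>v. \<bar>h v\<bar> \<le> 2 * int K + 1"
  proof (intro ballI allI)
    fix h v assume "h \<in> admissible E \<Delta> \<xi>'"
    then have "\<bar>h v\<bar> \<le> B2" using B2 by blast
    then show "\<bar>h v\<bar> \<le> 2 * int K + 1" using KB by linarith
  qed
  define \<alpha> where "\<alpha> = F (\<lambda>_. 1)"
  define \<gamma> where "\<gamma> = G (\<lambda>_. 1)"
  define D where "D = Sx E c \<Delta> \<xi> K (\<lambda>_. 1)"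
  define D' where "D' = Sx E c \<Delta> \<xi>' K (\<lambda>_. 1)"
  define A where "A = Sx E c \<Delta> \<xi> K F"
  define A' where "A' = Sx E c \<Delta> \<xi>' K F"
  define B where "B = Sx E c \<Delta> \<xi> K G"
  define C where "C = Sx E c \<Delta> \<xi> K (\<lambda>n. F n * G n)"
  have D: "D > 0" unfolding D_def by (rule Sx_pos[OF cpos bcx bnd])
  have D': "D' > 0" unfolding D'_def by (rule Sx_pos[OF cpos bcx' bnd'])
  have e1: "expect E c \<Delta> \<xi> (\<lambda>h. F (\<lambda>v. \<bar>h v\<bar>) * G (\<lambda>v. \<bar>h v\<bar>)) = C / D"
    using expect_Sx[OF bnd, of c "\<lambda>n. F n * G n"] by (simp add: C_def D_def)
  have e2: "expect E c \<Delta> \<xi> (\<lambda>h. F (\<lambda>v. \<bar>h v\<bar>)) = A / D"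
    using expect_Sx[OF bnd, of c F] by (simp add: A_def D_def)
  have e3: "expect E c \<Delta> \<xi> (\<lambda>h. G (\<lambda>v. \<bar>h v\<bar>)) = B / D"
    using expect_Sx[OF bnd, of c G] by (simp add: B_def D_def)
  have e4: "expect E c \<Delta> \<xi>' (\<lambda>h. F (\<lambda>v. \<bar>h v\<bar>)) = A' / D'"
    using expect_Sx[OF bnd', of c F] by (simp add: A'_def D'_def)
  have fkg: "(A - \<alpha> * D) * (B - \<gamma> * D) \<le> (C - \<gamma> * A - \<alpha> * B + \<alpha> * \<gamma> * D) * D"
    using fkg_core[OF sgE cpos bc incF incG, of K]
    unfolding Sx_shift Sx_shift2 by (simp add: A_def B_def C_def D_def \<alpha>_def \<gamma>_def)
  then have "A * B \<le> C * D" by (simp add: algebra_simps)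
  then have P1: "A / D * (B / D) \<le> C / D"
    using D by (simp add: field_simps power2_eq_square mult_right_mono)
  have hol: "(A - \<alpha> * D) * D' \<le> (A' - \<alpha> * D') * D"
    using holley_core[OF sgE cpos bc bc' le incF, of K]
    unfolding Sx_shift by (simp add: A_def A'_def D_def D'_def \<alpha>_def)
  then have "A * D' \<le> A' * D" by (simp add: algebra_simps)
  then have P2: "A / D \<le> A' / D'"
    using D D' by (simp add: field_simps)
  show ?thesis using P1 P2 e1 e2 e3 e4 by simp
qed


end
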